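(* Assume every vertex of $T$ has at least two successors and that $\nu$ is a doubling measure on $(\partial T,\rho)$. Let $b\in L^1_{\mathrm{loc}}(\partial T,\nu)$. The following are equivalent: (i) $b\in BMO$; (ii) there is a function $f:[0,\infty)\times(0,\infty)\to[0,\infty)$ (depending on $b$), nondecreasing in its first variable, such that for every operator $\mathcal K\in\mathcal O$, with kernel $K$ having constants $C_K$ and $\alpha$ as in conditions (A2) and (A3), the measure $\sigma=|\mathcal Kb|\,m_\nu$ on $T$ satisfies $$\sigma(T_v)=\sum_{x\in T_v}|\mathcal Kb(x)|\,m_\nu(x)\le f(C_K,\alpha)\,m_\nu(v)\qquad\forall v\in T,$$ where $\mathcal Kb(x)=\int_{\partial T}K(x,\omega)b(\omega)\,d\nu(\omega)$.
   Context: Let $T$ be a tree, identified with its vertex set, with graph distance $d$; $x\sim y$ means $d(x,y)=1$. Let $\Omega$ be the boundary (space of ends) of $T$; fix $\omega_*\in\Omega$ and set $\partial T=\Omega\setminus\{\omega_*\}$. For $x\in T$, $[x,\omega_* )$ is the geodesic ray from $x$ to $\omega_*$; for $\omega\in\partial T$, $(\omega,\omega_* )$ is the doubly infinite geodesic joining $\omega$ and $\omega_*$. For $y\in T$ write $x\le y$ if either $x\in T$ and $y\in[x,\omega_* )$, or $x\in\partial T$ and $y\in(x,\omega_* )$. Fix $o\in T$ and let $(x_j)_{j\ge0}$ enumerate $[o,\omega_* )$ with $x_0=o$, $x_j\sim x_{j+1}$; the level is $\ell(x)=\lim_{j\to\infty}(j-d(x,x_j))$. Successors: $s(x)=\{y\sim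 x:\ell(y)=\ell(x)-1\}$. The confluent $\eta\wedge\zeta$ of $\eta,\zeta\in T\cup\partial T$ is the vertex of minimal level among $x\in T$ with $\eta\le x$, $\zeta\le x$. Sectors: $T_x=\{y\in T:y\le x\}$, $\partial T_x=\{\omega\in\partial T:\omega\le x\}$. Gromov distance: $\rho(\eta,\xi)=e^{\ell(\eta\wedge\xi)}$ for $\eta\ne\xi$, $\rho(\eta,\eta)=0$; its balls are the sets $\partial T_x$. $\nu$ is a positive Borel measure on $\partial T$ with $0<\nu(\partial T_x)<\infty$; doubling means $\nu(B_\rho(\omega,2r))\le C\nu(B_\rho(\omega,r))$ for all $\omega,r$. $m_\nu(x)=\nu(\partial T_x)$. $L^1_{\mathrm{loc}}$ means integrable on each $\partial T_x$. For $E\subset\partial T$, $b_E=\frac{1}{\nu(E)}\int_Eb\,d\nu$; $BMO$ is the space of $b\in L^1_{\mathrm{loc}}(\partial T,\nu)$ with $\|b\|_{BMO}=\sup_{x\in T}\frac{1}{\nu(\partial T_x)}\int_{\partial T_x}|b-b_{\partial T_x}|\,d\nu<\infty$. The class $\mathcal O$ consists of integral operators $\mathcal Kg(x)=\int_{\partial T}K(x,\omega)g(\omega)\,d\nu(\omega)$ whose kernel $K:T\times\partial T\to\mathbb C$ satisfies: (A1) for every $x_0\in T$, $\omega\mapsto K(x_0,\omega)$ is $\nu$-integrable and $\int_{\partial T}K(x_0,\omega)\,d\nu(\omega)=0$; (A2) $C_K:=\operatorname{ess\,sup}_{\omega\in\partial T}\sum_{x\in T}|K(x,\omega)|m_\nu(x)<\infty$;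 (A3) there is $\alpha>0$ with $|K(x,\omega)|\le m_\nu(x)^\alpha/m_\nu(x\wedge\omega)^{\alpha+1}$ for all $x\in T$, $\omega\in\partial T$. *)

theory Defs
  imports "HOL-Probability.Probability"
begin

text \<open>
A tree T with a distinguished end omega_* is encoded by its vertex type 'v and
the parent map p :: 'v => 'v, where p x is the neighbour of x on the ray [x, omega_*).
The undirected edges of T are exactly the pairs {x, p x}.  The point o is the base vertex.
A boundary point omega in dT = Omega - {omega_*} is encoded by the doubly infinite geodesic
(omega, omega_*) parametrised by level: a map g :: int => 'v with p (g n) = g (n+1) and
level (g n) = n.
\<close>

definition is_tree_with_end :: "('v \<Rightarrow> 'v) \<Rightarrow> bool" where
  "is_tree_with_end p \<longleftrightarrow>
     (\<forall>x n. n > 0 \<longrightarrow> (p ^^ n) x \<noteq> x) \<and>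
     (\<forall>x y. \<exists>j k. (p ^^ j) x = (p ^^ k) y)"

text \<open>level: l(x) = j - k whenever p^k x = p^j o (equals lim_j (j - d(x, x_j))).\<close>
definition lev :: "'v \<Rightarrow> ('v \<Rightarrow> 'v) \<Rightarrow> 'v \<Rightarrow> int" where
  "lev o' p x = (THE l. \<exists>j k. (p ^^ k) x = (p ^^ j) o' \<and> l = int j - int k)"

definition succs :: "('v \<Rightarrow> 'v) \<Rightarrow> 'v \<Rightarrow> 'v set" where
  "succs p x = {y. p y = x}"

definition vle :: "('v \<Rightarrow> 'v) \<Rightarrow> 'v \<Rightarrow> 'v \<Rightarrow> bool" where
  "vle p x y \<longleftrightarrow> (\<exists>k. (p ^^ k) x = y)"

definition bdry :: "'v \<Rightarrow> ('v \<Rightarrow> 'v) \<Rightarrow> (int \<Rightarrow> 'v) set" where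
  "bdry o' p = {g. \<forall>n. p (g n) = g (n + 1) \<and> lev o' p (g n) = n}"

definition sector :: "('v \<Rightarrow> 'v) \<Rightarrow> 'v \<Rightarrow> 'v set" where
  "sector p x = {y. vle p y x}"

definition bsector :: "'v \<Rightarrow> ('v \<Rightarrow> 'v) \<Rightarrow> 'v \<Rightarrow> (int \<Rightarrow> 'v) set" where
  "bsector o' p x = {g \<in> bdry o' p. x \<in> range g}"

definition conf_vb :: "('v \<Rightarrow> 'v) \<Rightarrow> 'v \<Rightarrow> (int \<Rightarrow> 'v) \<Rightarrow> 'v" where
  "conf_vb p x g = (p ^^ (LEAST k. (p ^^ k) x \<in> range g)) x"

definition conf_bb :: "(int \<Rightarrow> 'v) \<Rightarrow> (int \<Rightarrow> 'v) \<Rightarrow> 'v" where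
  "conf_bb g h = g (LEAST n. g n = h n)"

definition rho :: "'v \<Rightarrow> ('v \<Rightarrow> 'v) \<Rightarrow> (int \<Rightarrow> 'v) \<Rightarrow> (int \<Rightarrow> 'v) \<Rightarrow> real" where
  "rho o' p g h = (if g = h then 0 else exp (real_of_int (lev o' p (conf_bb g h))))"

definition rball :: "'v \<Rightarrow> ('v \<Rightarrow> 'v) \<Rightarrow> (int \<Rightarrow> 'v) \<Rightarrow> real \<Rightarrow> (int \<Rightarrow> 'v) set" where
  "rball o' p g r = {h \<in> bdry o' p. rho o' p g h < r}"

definition bd_open :: "'v \<Rightarrow> ('v \<Rightarrow> 'v) \<Rightarrow> (int \<Rightarrow> 'v) set set" where
  "bd_open o' p = {U. U \<subseteq> bdry o' p \<and>
      (\<forall>g\<in>U. \<exists>r>0. rball o' p g r \<subseteq> U)}"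

definition is_borel_measure_on_bdry :: "'v \<Rightarrow> ('v \<Rightarrow> 'v) \<Rightarrow> (int \<Rightarrow> 'v) measure \<Rightarrow> bool" where
  "is_borel_measure_on_bdry o' p \<nu> \<longleftrightarrow>
     sets \<nu> = sets (sigma (bdry o' p) (bd_open o' p)) \<and>
     (\<forall>x. 0 < emeasure \<nu> (bsector o' p x) \<and> emeasure \<nu> (bsector o' p x) < \<infinity>)"

definition doubling :: "'v \<Rightarrow> ('v \<Rightarrow> 'v) \<Rightarrow> (int \<Rightarrow> 'v) measure \<Rightarrow> bool" where
  "doubling o' p \<nu> \<longleftrightarrow> (\<exists>C::real. \<forall>g\<in>bdry o' p. \<forall>r.
      emeasure \<nu> (rball o' p g (2 * r)) \<le> ennreal C * emeasure \<nu> (rball o' p g r))"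

definition m_nu :: "'v \<Rightarrow> ('v \<Rightarrow> 'v) \<Rightarrow> (int \<Rightarrow> 'v) measure \<Rightarrow> 'v \<Rightarrow> real" where
  "m_nu o' p \<nu> x = measure \<nu> (bsector o' p x)"

definition L1loc :: "'v \<Rightarrow> ('v \<Rightarrow> 'v) \<Rightarrow> (int \<Rightarrow> 'v) measure \<Rightarrow> ((int \<Rightarrow> 'v) \<Rightarrow> complex) \<Rightarrow> bool" where
  "L1loc o' p \<nu> b \<longleftrightarrow> b \<in> borel_measurable \<nu> \<and> (\<forall>x. set_integrable \<nu> (bsector o' p x) b)"

definition avg :: "(int \<Rightarrow> 'v) measure \<Rightarrow> (int \<Rightarrow> 'v) set \<Rightarrow> ((int \<Rightarrow> 'v) \<Rightarrow> complex) \<Rightarrow> complex" where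
  "avg \<nu> E b = (1 / measure \<nu> E) *\<^sub>R (LINT \<omega>:E|\<nu>. b \<omega>)"

definition in_BMO :: "'v \<Rightarrow> ('v \<Rightarrow> 'v) \<Rightarrow> (int \<Rightarrow> 'v) measure \<Rightarrow> ((int \<Rightarrow> 'v) \<Rightarrow> complex) \<Rightarrow> bool" where
  "in_BMO o' p \<nu> b \<longleftrightarrow> L1loc o' p \<nu> b \<and>
     (\<exists>C. \<forall>x. (1 / measure \<nu> (bsector o' p x)) *
        (LINT \<omega>:bsector o' p x|\<nu>. cmod (b \<omega> - avg \<nu> (bsector o' p x) b)) \<le> C)"

definition A1 :: "(int \<Rightarrow> 'v) measure \<Rightarrow> ('v \<Rightarrow> (int \<Rightarrow> 'v) \<Rightarrow> complex) \<Rightarrow> bool" where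
  "A1 \<nu> K \<longleftrightarrow> (\<forall>x. integrable \<nu> (K x) \<and> (LINT \<omega>|\<nu>. K x \<omega>) = 0)"

definition C_K :: "'v \<Rightarrow> ('v \<Rightarrow> 'v) \<Rightarrow> (int \<Rightarrow> 'v) measure \<Rightarrow> ('v \<Rightarrow> (int \<Rightarrow> 'v) \<Rightarrow> complex) \<Rightarrow> ennreal" where
  "C_K o' p \<nu> K = esssup \<nu> (\<lambda>\<omega>. \<Sum>\<^sub>\<infinity>x\<in>UNIV. ennreal (cmod (K x \<omega>) * m_nu o' p \<nu> x))"

definition A2 :: "'v \<Rightarrow> ('v \<Rightarrow> 'v) \<Rightarrow> (int \<Rightarrow> 'v) measure \<Rightarrow> ('v \<Rightarrow> (int \<Rightarrow> 'v) \<Rightarrow> complex) \<Rightarrow> bool" where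
  "A2 o' p \<nu> K \<longleftrightarrow> C_K o' p \<nu> K < \<infinity>"

definition A3 :: "'v \<Rightarrow> ('v \<Rightarrow> 'v) \<Rightarrow> (int \<Rightarrow> 'v) measure \<Rightarrow> ('v \<Rightarrow> (int \<Rightarrow> 'v) \<Rightarrow> complex) \<Rightarrow> real \<Rightarrow> bool" where
  "A3 o' p \<nu> K \<alpha> \<longleftrightarrow> \<alpha> > 0 \<and> (\<forall>x. \<forall>\<omega>\<in>bdry o' p.
      cmod (K x \<omega>) \<le> m_nu o' p \<nu> x powr \<alpha> / m_nu o' p \<nu> (conf_vb p x \<omega>) powr (\<alpha> + 1))"

definition in_class_O :: "'v \<Rightarrow> ('v \<Rightarrow> 'v) \<Rightarrow> (int \<Rightarrow> 'v) measure \<Rightarrow> ('v \<Rightarrow> (int \<Rightarrow> 'v) \<Rightarrow> complex) \<Rightarrow> bool" where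
  "in_class_O o' p \<nu> K \<longleftrightarrow> A1 \<nu> K \<and> A2 o' p \<nu> K \<and> (\<exists>\<alpha>. A3 o' p \<nu> K \<alpha>)"

definition Kop :: "(int \<Rightarrow> 'v) measure \<Rightarrow> ('v \<Rightarrow> (int \<Rightarrow> 'v) \<Rightarrow> complex) \<Rightarrow> ((int \<Rightarrow> 'v) \<Rightarrow> complex) \<Rightarrow> 'v \<Rightarrow> complex" where
  "Kop \<nu> K b x = (LINT \<omega>|\<nu>. K x \<omega> * b \<omega>)"

end

theory Submission
  imports Defs
begin

locale S =
  fixes o' :: "'v" and p :: "'v \<Rightarrow> 'v" and \<nu> :: "(int \<Rightarrow> 'v) measure"
    and b :: "(int \<Rightarrow> 'v) \<Rightarrow> complex"
  assumes tree: "is_tree_with_end p"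
    and two_succ: "\<forall>x. \<exists>y z. y \<in> succs p x \<and> z \<in> succs p x \<and> y \<noteq> z"
    and borel: "is_borel_measure_on_bdry o' p \<nu>"
    and dbl: "doubling o' p \<nu>"
    and loc: "L1loc o' p \<nu> b"
begin

abbreviation "L \<equiv> lev o' p"
abbreviation "BD \<equiv> bdry o' p"
abbreviation "BS \<equiv> bsector o' p"
abbreviation "m \<equiv> m_nu o' p \<nu>"

lemma acyc: "n > 0 \<Longrightarrow> (p ^^ n) x \<noteq> x"
  using tree unfolding is_tree_with_end_def by blast

lemma common: "\<exists>j k. (p ^^ j) x = (p ^^ k) y"
  using tree unfolding is_tree_with_end_def by blast

lemma pow_inj: assumes "(p ^^ a) y = (p ^^ c) y" shows "a = c"
proof (rule ccontr)
  assume "a \<noteq> c"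
  then consider "a < c" | "c < a" by linarith
  then show False
  proof cases
    case 1
    have "(p ^^ (c - a)) ((p ^^ a) y) = (p ^^ c) y"
      using 1 by (metis funpow_add le_add_diff_inverse2 less_imp_le o_apply)
    then show False using acyc[of "c - a" "(p ^^ a) y"] 1 assms by simp
  next
    case 2
    have "(p ^^ (a - c)) ((p ^^ c) y) = (p ^^ a) y"
      using 2 by (metis funpow_add le_add_diff_inverse2 less_imp_le o_apply)
    then show False using acyc[of "a - c" "(p ^^ c) y"] 2 assms by simp
  qed
qed

lemma lev_eq: assumes "(p ^^ k) x = (p ^^ j) o'" shows "L x = int j - int k"
proof -
  have "\<exists>!l. \<exists>j k. (p ^^ k) x = (p ^^ j) o' \<and> l = int j - int k"
  proof
    show "\<exists>j' k'. (p ^^ k') x = (p ^^ j') o' \<and> int j - int k = int j' - int k'"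
      using assms by blast
  next
    fix l assume "\<exists>j' k'. (p ^^ k') x = (p ^^ j') o' \<and> l = int j' - int k'"
    then obtain j' k' where h: "(p ^^ k') x = (p ^^ j') o'" "l = int j' - int k'" by blast
    have "(p ^^ (k' + j)) o' = (p ^^ (k + j')) o'"
    proof -
      have "(p ^^ (k' + j)) o' = (p ^^ k') ((p ^^ j) o')" by (simp add: funpow_add)
      also have "\<dots> = (p ^^ k') ((p ^^ k) x)" using assms by simp
      also have "\<dots> = (p ^^ k) ((p ^^ k') x)" by (metis funpow_add add.commute o_apply)
      also have "\<dots> = (p ^^ k) ((p ^^ j') o')" using h by simp
      also have "\<dots> = (p ^^ (k + j')) o'" by (simp add: funpow_add)
      finally show ?thesis .
    qed
    then have "k' + j = k + j'" by (rule pow_inj)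
    then show "l = int j - int k" using h by linarith
  qed
  then show ?thesis unfolding lev_def
    by (rule the1_equality) (use assms in blast)
qed

lemma lev_funpow: "L ((p ^^ n) x) = L x + int n"
proof -
  obtain j k where h: "(p ^^ j) x = (p ^^ k) o'" using common by blast
  have "(p ^^ j) ((p ^^ n) x) = (p ^^ (k + n)) o'"
    by (metis h funpow_add add.commute o_apply)
  then have "L ((p ^^ n) x) = int (k + n) - int j" by (rule lev_eq)
  moreover have "L x = int k - int j" using h by (rule lev_eq)
  ultimately show ?thesis by simp
qed

lemma lev_p: "L (p x) = L x + 1"
  using lev_funpow[of 1 x] by simp

lemma same_lev: assumes "(p ^^ n) x = y" "L x = L y" shows "x = y"
  using assms lev_funpow[of n x] by (cases n) auto

lemma bdry_D: "g \<in> BD \<Longrightarrow> p (g n) = g (n + 1) \<and> L (g n) = n"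
  unfolding bdry_def by blast

lemma bdry_pow: "g \<in> BD \<Longrightarrow> (p ^^ k) (g n) = g (n + int k)"
  by (induction k) (auto simp: bdry_D algebra_simps)

lemma in_range_iff: "g \<in> BD \<Longrightarrow> x \<in> range g \<longleftrightarrow> g (L x) = x"
  using bdry_D by (metis range_eqI rangeE)

lemma bsector_iff: "g \<in> BS x \<longleftrightarrow> g \<in> BD \<and> g (L x) = x"
  unfolding bsector_def using in_range_iff by blast

lemma bsector_sub_p: "BS x \<subseteq> BS (p x)"
  unfolding bsector_iff[abs_def]
  by (auto simp: bsector_iff lev_p bdry_D) (metis bdry_D)

lemma bsector_pow: "g \<in> BS x \<Longrightarrow> g \<in> BS ((p ^^ k) x)"
  by (induction k) (auto dest: bsector_sub_p[THEN subsetD])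

end

context S begin

lemma agree_up: assumes "g \<in> BD" "h \<in> BD" "g n = h n" "n \<le> k" shows "g k = h k"
proof -
  have k: "k = n + int (nat (k - n))" using assms by simp
  show ?thesis using bdry_pow[OF assms(1), of "nat (k-n)" n] bdry_pow[OF assms(2), of "nat (k-n)" n] assms k
    by metis
qed

lemma some_agree: assumes "g \<in> BD" "h \<in> BD" shows "\<exists>n. g n = h n"
proof -
  obtain j k where "(p ^^ j) (g 0) = (p ^^ k) (h 0)" using common by blast
  then have e: "g (int j) = h (int k)" using bdry_pow assms by simp
  then have "L (g (int j)) = L (h (int k))" by simp
  then have "int j = int k" using bdry_D assms by simp
  then show ?thesis using e by auto
qed

lemma least_agree: assumes "g \<in> BD" "h \<in> BD" "g \<noteq> h"
  obtains N where "g N = h N" "\<And>n. g n = h n \<Longrightarrow> N \<le> n" "(LEAST n. g n = h n) = N"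
proof -
  obtain m0 where m0: "g m0 \<noteq> h m0" using assms by auto
  have gt: "m0 < n" if "g n = h n" for n
    by (rule ccontr) (use agree_up[OF assms(1,2) that, of m0] m0 in auto)
  obtain j where j: "g j = h j" using some_agree assms by blast
  define P where "P t \<longleftrightarrow> g (m0 + 1 + int t) = h (m0 + 1 + int t)" for t
  have "P (nat (j - m0 - 1))" unfolding P_def using gt[OF j] j by simp
  then have PL: "P (LEAST t. P t)" by (rule LeastI)
  define N where "N = m0 + 1 + int (LEAST t. P t)"
  have 1: "g N = h N" using PL unfolding N_def P_def by simp
  have 2: "N \<le> n" if "g n = h n" for n
  proof -
    have "P (nat (n - m0 - 1))" unfolding P_def using gt[OF that] that by simp
    then have "(LEAST t. P t) \<le> nat (n - m0 - 1)" by (rule Least_le)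
    then show ?thesis unfolding N_def using gt[OF that] by linarith
  qed
  have "(LEAST n. g n = h n) = N" by (rule Least_equality) (use 1 2 in auto)
  then show ?thesis using that 1 2 by blast
qed

lemma rball_eq: assumes g: "g \<in> BD" and r: "exp (real_of_int l) < r" "r \<le> exp (real_of_int l + 1)"
  shows "rball o' p g r = BS (g l)"
proof (intro set_eqI iffI)
  fix h assume "h \<in> rball o' p g r"
  then have h: "h \<in> BD" "rho o' p g h < r" unfolding rball_def by auto
  show "h \<in> BS (g l)"
  proof (cases "g = h")
    case True then show ?thesis using g bsector_iff bdry_D by auto
  next
    case False
    obtain N where N: "g N = h N" "\<And>n. g n = h n \<Longrightarrow> N \<le> n" "(LEAST n. g n = h n) = N"
      using least_agree[OF g h(1) False] by blast
    have "rho o' p g h = exp (real_of_int N)" using False N(3) bdry_D[OF g]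
      unfolding rho_def conf_bb_def by simp
    then have "exp (real_of_int N) < exp (real_of_int l + 1)" using h r by linarith
    then have "N \<le> l" by simp
    then have "g l = h l" using agree_up[OF g h(1) N(1)] by simp
    then show ?thesis using h bsector_iff bdry_D[OF g] by metis
  qed
next
  fix h assume "h \<in> BS (g l)"
  then have h: "h \<in> BD" "h l = g l" using bsector_iff bdry_D[OF g] by auto
  show "h \<in> rball o' p g r"
  proof (cases "g = h")
    case True then show ?thesis using g r unfolding rball_def rho_def
      by (auto intro: less_trans[OF exp_gt_zero])
  next
    case False
    obtain N where N: "g N = h N" "\<And>n. g n = h n \<Longrightarrow> N \<le> n" "(LEAST n. g n = h n) = N"
      using least_agree[OF g h(1) False] by blast
    have "rho o' p g h = exp (real_of_int N)" using False N(3) bdry_D[OF g]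
      unfolding rho_def conf_bb_def by simp
    moreover have "N \<le> l" using N(2) h by simp
    ultimately have "rho o' p g h \<le> exp l" by simp
    then show ?thesis using h r unfolding rball_def by simp
  qed
qed

lemma BS_open: "BS x \<in> bd_open o' p"
  unfolding bd_open_def
proof (intro CollectI conjI ballI)
  show "BS x \<subseteq> BD" unfolding bsector_def by auto
  fix g assume g: "g \<in> BS x"
  then have gg: "g \<in> BD" "g (L x) = x" using bsector_iff by auto
  have "rball o' p g (exp (real_of_int (L x) + 1)) = BS x"
    using rball_eq[OF gg(1), of "L x"] gg by simp
  then show "\<exists>r>0. rball o' p g r \<subseteq> BS x" by (intro exI[of _ "exp (real_of_int (L x) + 1)"]) auto
qed

lemma sets_nu: "sets \<nu> = sigma_sets BD (bd_open o' p)"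
  using borel unfolding is_borel_measure_on_bdry_def
  by (metis (no_types, lifting) bd_open_def mem_Collect_eq sets_measure_of subsetI PowI)

lemma space_nu: "space \<nu> = BD"
proof -
  have "bd_open o' p \<subseteq> Pow BD" unfolding bd_open_def by auto
  then show ?thesis
    using borel unfolding is_borel_measure_on_bdry_def
    by (metis sets_eq_imp_space_eq space_measure_of_conv)
qed

lemma BS_sets[measurable]: "BS x \<in> sets \<nu>"
  using sets_nu BS_open by auto

lemma em_pos: "0 < emeasure \<nu> (BS x)" and em_fin: "emeasure \<nu> (BS x) < \<infinity>"
  using borel unfolding is_borel_measure_on_bdry_def by auto

lemma em_eq: "emeasure \<nu> (BS x) = ennreal (m x)"
  unfolding m_nu_def using em_fin[of x] emeasure_eq_ennreal_measure[of \<nu> "BS x"] by auto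

lemma m_pos: "0 < m x"
  using em_pos em_eq by (metis ennreal_less_zero_iff)

lemma BS_ne: "BS x \<noteq> {}"
  by (metis em_pos emeasure_empty less_irrefl)

lemma dbl_step: obtains C :: real where "\<And>x. ennreal (m (p x)) \<le> ennreal C * ennreal (m x)"
proof -
  obtain C :: real where C: "\<forall>g\<in>BD. \<forall>r. emeasure \<nu> (rball o' p g (2 * r)) \<le> ennreal C * emeasure \<nu> (rball o' p g r)"
    using dbl unfolding doubling_def by blast
  have "ennreal (m (p x)) \<le> ennreal C * ennreal (m x)" for x
  proof -
    obtain g where g: "g \<in> BS x" using BS_ne by blast
    then have gg: "g \<in> BD" "g (L x) = x" using bsector_iff by auto
    define r where "r = exp (real_of_int (L x) + 1)"
    have e1: "(2::real) \<le> exp 1" using exp_ge_add_one_self[of 1] by simp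
    have "rball o' p g r = BS x" using rball_eq[OF gg(1), of "L x"] gg unfolding r_def by simp
    moreover have "rball o' p g (2 * r) = BS (p x)"
    proof -
      have "exp (real_of_int (L x + 1)) < 2 * r" unfolding r_def by simp
      moreover have "2 * r \<le> exp (real_of_int (L x + 1) + 1)"
      proof -
        have "exp (real_of_int (L x + 1) + 1) = r * exp 1" unfolding r_def by (simp add: exp_add[symmetric])
        then show ?thesis using e1 unfolding r_def by (simp add: mult_left_mono)
      qed
      ultimately have "rball o' p g (2 * r) = BS (g (L x + 1))" by (rule rball_eq[OF gg(1)])
      moreover have "g (L x + 1) = p x" using bdry_D[OF gg(1), of "L x"] gg by simp
      ultimately show ?thesis by simp
    qed
    ultimately show ?thesis using C gg(1) em_eq by metis
  qed
  then show ?thesis using that by blast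
qed

end

context S begin

lemma sibling: "\<exists>y. p y = p x \<and> y \<noteq> x"
  using two_succ unfolding succs_def by (metis mem_Collect_eq)

lemma BS_disj: assumes "p y = p x" "y \<noteq> x" shows "BS x \<inter> BS y = {}"
proof (rule ccontr)
  assume "BS x \<inter> BS y \<noteq> {}"
  then obtain g where g: "g \<in> BS x" "g \<in> BS y" by blast
  have "L x = L y" using lev_p[of x] lev_p[of y] assms by simp
  then show False using g bsector_iff assms by metis
qed

lemma m_sib: assumes "p y = p x" "y \<noteq> x" shows "m x + m y \<le> m (p x)"
proof -
  have e: "emeasure \<nu> (BS x \<union> BS y) = emeasure \<nu> (BS x) + emeasure \<nu> (BS y)"
    using BS_disj[OF assms] by (intro plus_emeasure[symmetric]) auto
  have "emeasure \<nu> (BS x \<union> BS y) \<le> emeasure \<nu> (BS (p x))"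
    using bsector_sub_p[of x] bsector_sub_p[of y] assms by (intro emeasure_mono) auto
  then have "ennreal (m x) + ennreal (m y) \<le> ennreal (m (p x))" by (simp add: em_eq e)
  then show ?thesis using m_pos[of x] m_pos[of y] m_pos[of "p x"]
    by (simp add: ennreal_plus[symmetric] del: ennreal_plus)
qed

lemma ex_D: "\<exists>C>1. \<forall>x. m (p x) \<le> C * m x"
proof -
  obtain C :: real where C: "\<And>x. ennreal (m (p x)) \<le> ennreal C * ennreal (m x)"
    using dbl_step by blast
  have Cpos: "C > 0"
  proof (rule ccontr)
    assume "\<not> C > 0"
    then have "ennreal C = 0" by (simp add: ennreal_eq_0_iff)
    then show False using C[of o'] m_pos[of "p o'"] by simp
  qed
  have C': "m (p x) \<le> C * m x" for x
    using C[of x] m_pos[of x] Cpos by (simp add: ennreal_mult[symmetric])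
  obtain y where y: "p y = p o'" "y \<noteq> o'" using sibling by blast
  have "m o' < m (p o')" using m_sib[OF y] m_pos[of y] by simp
  then have "m o' < C * m o'" using C'[of o'] by simp
  then have "C > 1" using m_pos[of o'] by simp
  then show ?thesis using C' by blast
qed

definition D where "D = (SOME C. C > 1 \<and> (\<forall>x. m (p x) \<le> C * m x))"

lemma D_gt1: "D > 1" and D_step: "m (p x) \<le> D * m x"
  using someI_ex[OF ex_D] unfolding D_def[symmetric] by auto

definition \<delta> where "\<delta> = 1 - 1 / D"

lemma delta_bounds: "0 < \<delta>" "\<delta> < 1"
  unfolding \<delta>_def using D_gt1 by auto

lemma m_le_delta: "m x \<le> \<delta> * m (p x)"
proof -
  obtain y where y: "p y = p x" "y \<noteq> x" using sibling by blast
  have "m (p x) \<le> D * m y" using D_step[of y] y by simp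
  then have "m (p x) / D \<le> m y" using D_gt1 by (simp add: field_simps)
  then show ?thesis using m_sib[OF y] unfolding \<delta>_def by (simp add: algebra_simps)
qed

lemma m_le_delta_pow: "m x \<le> \<delta> ^ k * m ((p ^^ k) x)"
proof (induction k)
  case 0 then show ?case by simp
next
  case (Suc k)
  have "m ((p ^^ k) x) \<le> \<delta> * m ((p ^^ Suc k) x)" using m_le_delta[of "(p ^^ k) x"] by simp
  then have "\<delta> ^ k * m ((p ^^ k) x) \<le> \<delta> ^ k * (\<delta> * m ((p ^^ Suc k) x))"
    using delta_bounds by (intro mult_left_mono) auto
  moreover have "\<delta> ^ k * (\<delta> * m ((p ^^ Suc k) x)) = \<delta> ^ Suc k * m ((p ^^ Suc k) x)" by (simp add: mult_ac)
  ultimately show ?case using Suc by linarith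
qed

lemma m_ratio: "m x / m ((p ^^ k) x) \<le> \<delta> ^ k"
  using m_le_delta_pow[of x k] m_pos[of "(p ^^ k) x"] by (simp add: divide_le_eq)

lemma m_ratio_powr: assumes "\<alpha> > 0" shows "(m x / m ((p ^^ k) x)) powr \<alpha> \<le> (\<delta> powr \<alpha>) ^ k"
proof -
  have "(m x / m ((p ^^ k) x)) powr \<alpha> \<le> (\<delta> ^ k) powr \<alpha>"
    using m_ratio[of x k] m_pos[of x] m_pos[of "(p ^^ k) x"] assms by (intro powr_mono2) auto
  also have "\<dots> = (\<delta> powr \<alpha>) ^ k" using delta_bounds by (simp add: powr_realpow[symmetric] powr_powr mult.commute)
  finally show ?thesis .
qed

lemma reach: assumes "g \<in> BD" shows "\<exists>k. (p ^^ k) x \<in> range g"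
proof -
  obtain j k where "(p ^^ j) x = (p ^^ k) (g 0)" using common by blast
  then show ?thesis using bdry_pow[OF assms] by auto
qed

lemma range_up: assumes "g \<in> BD" "(p ^^ k) x \<in> range g" "k \<le> k'" shows "(p ^^ k') x \<in> range g"
proof -
  obtain n where n: "(p ^^ k) x = g n" using assms by auto
  have "(p ^^ k') x = (p ^^ (k' - k)) ((p ^^ k) x)"
    using assms(3) by (metis funpow_add le_add_diff_inverse2 o_apply)
  then show ?thesis using n bdry_pow[OF assms(1)] by auto
qed

definition kk where "kk x g = (LEAST k. (p ^^ k) x \<in> range g)"

lemma conf_kk: "conf_vb p x g = (p ^^ kk x g) x"
  unfolding conf_vb_def kk_def by simp

lemma kk_iff: assumes "g \<in> BD" shows "g \<in> BS ((p ^^ k) x) \<longleftrightarrow> kk x g \<le> k"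
proof
  assume "g \<in> BS ((p ^^ k) x)"
  then have "(p ^^ k) x \<in> range g" unfolding bsector_def by auto
  then show "kk x g \<le> k" unfolding kk_def by (rule Least_le)
next
  assume "kk x g \<le> k"
  moreover have "(p ^^ kk x g) x \<in> range g"
    unfolding kk_def using reach[OF assms] by (rule LeastI_ex)
  ultimately have "(p ^^ k) x \<in> range g" using range_up assms by blast
  then show "g \<in> BS ((p ^^ k) x)" unfolding bsector_def using assms by auto
qed

lemma in_conf: "g \<in> BD \<Longrightarrow> g \<in> BS (conf_vb p x g)"
  using kk_iff conf_kk by auto

lemma conf_self: assumes "g \<in> BS x" shows "conf_vb p x g = x"
proof -
  have "g \<in> BD" using assms unfolding bsector_def by auto
  then have "kk x g \<le> 0" using kk_iff[of g 0 x] assms by simp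
  then show ?thesis using conf_kk by simp
qed

lemma conf_out: assumes g: "g \<in> BD" and v: "(p ^^ j) x = v" and out: "g \<notin> BS v"
  shows "conf_vb p x g = conf_vb p v g"
proof -
  have "\<not> kk x g \<le> j" using kk_iff[OF g, of j x] v out by simp
  have e: "kk x g = kk v g + j"
  proof -
    have "g \<in> BS ((p ^^ (kk v g + j)) x)"
    proof -
      have "g \<in> BS ((p ^^ kk v g) v)" using kk_iff[OF g] by simp
      then show ?thesis using v by (simp add: funpow_add)
    qed
    then have 1: "kk x g \<le> kk v g + j" using kk_iff[OF g] by simp
    have "g \<in> BS ((p ^^ (kk x g)) x)" using kk_iff[OF g] by simp
    moreover have "(p ^^ (kk x g)) x = (p ^^ (kk x g - j)) v"
      using \<open>\<not> kk x g \<le> j\<close> v by (metis funpow_add le_add_diff_inverse nat_le_linear o_apply add.commute)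
    ultimately have "kk v g \<le> kk x g - j" using kk_iff[OF g] by simp
    then show ?thesis using 1 \<open>\<not> kk x g \<le> j\<close> by linarith
  qed
  show ?thesis unfolding conf_kk e using v by (simp add: funpow_add)
qed

end

context S begin

abbreviation "ab x \<equiv> avg \<nu> (BS x) b"

lemma b_meas[measurable]: "b \<in> borel_measurable \<nu>"
  using loc unfolding L1loc_def by blast

lemma int_b: "integrable \<nu> (\<lambda>\<omega>. indicator (BS x) \<omega> *\<^sub>R b \<omega>)"
  using loc unfolding L1loc_def set_integrable_def by blast

lemma int_ind: "integrable \<nu> (\<lambda>\<omega>. indicator (BS x) \<omega> :: real)"
  using em_fin[of x] by (intro integrable_real_indicator) auto

lemma int_c: "integrable \<nu> (\<lambda>\<omega>. indicator (BS x) \<omega> *\<^sub>R (c::complex))"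
  using int_ind by (rule integrable_scaleR_left)

lemma int_bc: "integrable \<nu> (\<lambda>\<omega>. indicator (BS x) \<omega> *\<^sub>R (b \<omega> - c))"
proof -
  have "integrable \<nu> (\<lambda>\<omega>. indicator (BS x) \<omega> *\<^sub>R b \<omega> - indicator (BS x) \<omega> *\<^sub>R c)"
    by (intro Bochner_Integration.integrable_diff int_b int_c)
  then show ?thesis by (simp add: scaleR_right_diff_distrib)
qed

lemma BS_space: "BS x \<inter> space \<nu> = BS x"
  using space_nu unfolding bsector_def by auto

lemma int_ind_val: "integral\<^sup>L \<nu> (\<lambda>\<omega>. indicator (BS x) \<omega> :: real) = m x"
  unfolding m_nu_def using BS_space[of x] by simp

lemma int_b_val: "integral\<^sup>L \<nu> (\<lambda>\<omega>. indicator (BS x) \<omega> *\<^sub>R b \<omega>) = m x *\<^sub>R ab x"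
  using m_pos[of x] unfolding avg_def set_lebesgue_integral_def m_nu_def by simp

lemma int_bc_val: "integral\<^sup>L \<nu> (\<lambda>\<omega>. indicator (BS x) \<omega> *\<^sub>R (b \<omega> - c)) = m x *\<^sub>R (ab x - c)"
proof -
  have "integral\<^sup>L \<nu> (\<lambda>\<omega>. indicator (BS x) \<omega> *\<^sub>R (b \<omega> - c)) =
     integral\<^sup>L \<nu> (\<lambda>\<omega>. indicator (BS x) \<omega> *\<^sub>R b \<omega> - indicator (BS x) \<omega> *\<^sub>R c)"
    by (simp add: scaleR_right_diff_distrib)
  also have "\<dots> = m x *\<^sub>R ab x - integral\<^sup>L \<nu> (\<lambda>\<omega>. indicator (BS x) \<omega> *\<^sub>R c)"
    using int_b int_c int_b_val by (subst Bochner_Integration.integral_diff) auto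
  also have "integral\<^sup>L \<nu> (\<lambda>\<omega>. indicator (BS x) \<omega> *\<^sub>R c) = m x *\<^sub>R c"
    using int_ind_val int_ind by (subst Bochner_Integration.integral_scaleR_left) auto
  finally show ?thesis by (simp add: scaleR_right_diff_distrib)
qed

end

locale SB = S +
  assumes bmo: "in_BMO o' p \<nu> b"
begin


definition B where "B = (SOME C. \<forall>x. (1 / measure \<nu> (BS x)) *
        (LINT \<omega>:BS x|\<nu>. cmod (b \<omega> - ab x)) \<le> C)"

lemma B_prop: "(1 / m x) * (LINT \<omega>:BS x|\<nu>. cmod (b \<omega> - ab x)) \<le> B"
  using someI_ex[OF bmo[unfolded in_BMO_def, THEN conjunct2]] unfolding B_def[symmetric] m_nu_def
  by blast

definition NI where "NI x c = (\<integral>\<^sup>+ \<omega>. ennreal (cmod (b \<omega> - c)) * indicator (BS x) \<omega> \<partial>\<nu>)"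

lemma norm_ind: "ennreal (norm (indicator A \<omega> *\<^sub>R (z::complex))) = ennreal (cmod z) * indicator A \<omega>"
  by (simp split: split_indicator)

lemma NI_ge: "ennreal (cmod (ab x - c) * m x) \<le> NI x c"
proof -
  have "ennreal (cmod (ab x - c) * m x) = ennreal (norm (integral\<^sup>L \<nu> (\<lambda>\<omega>. indicator (BS x) \<omega> *\<^sub>R (b \<omega> - c))))"
    using int_bc_val m_pos[of x] by (simp add: mult.commute)
  also have "\<dots> \<le> (\<integral>\<^sup>+ \<omega>. norm (indicator (BS x) \<omega> *\<^sub>R (b \<omega> - c)) \<partial>\<nu>)"
    using int_bc by (rule integral_norm_bound_ennreal)
  also have "\<dots> = NI x c" unfolding NI_def norm_ind by simp
  finally show ?thesis .
qed

lemma NI_avg: "NI x (ab x) \<le> ennreal (B * m x)"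
proof -
  have i: "integrable \<nu> (\<lambda>\<omega>. norm (indicator (BS x) \<omega> *\<^sub>R (b \<omega> - ab x)))"
    using int_bc by (rule integrable_norm)
  have "NI x (ab x) = (\<integral>\<^sup>+ \<omega>. ennreal (norm (indicator (BS x) \<omega> *\<^sub>R (b \<omega> - ab x))) \<partial>\<nu>)"
    unfolding NI_def norm_ind by simp
  also have "\<dots> = ennreal (integral\<^sup>L \<nu> (\<lambda>\<omega>. norm (indicator (BS x) \<omega> *\<^sub>R (b \<omega> - ab x))))"
    using i by (intro nn_integral_eq_integral) auto
  also have "integral\<^sup>L \<nu> (\<lambda>\<omega>. norm (indicator (BS x) \<omega> *\<^sub>R (b \<omega> - ab x))) = (LINT \<omega>:BS x|\<nu>. cmod (b \<omega> - ab x))"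
    unfolding set_lebesgue_integral_def by (rule Bochner_Integration.integral_cong) (auto split: split_indicator)
  also have "(LINT \<omega>:BS x|\<nu>. cmod (b \<omega> - ab x)) \<le> B * m x"
    using B_prop[of x] m_pos[of x] by (simp add: field_simps)
  finally show ?thesis by (simp add: ennreal_leI)
qed

lemma B_nonneg: "B \<ge> 0"
proof -
  have "(LINT \<omega>:BS o'|\<nu>. cmod (b \<omega> - ab o')) \<ge> 0"
    unfolding set_lebesgue_integral_def by (intro integral_nonneg_AE) auto
  then have "0 \<le> (1 / m o') * (LINT \<omega>:BS o'|\<nu>. cmod (b \<omega> - ab o'))" using m_pos[of o'] by simp
  then show ?thesis using B_prop[of o'] by linarith
qed

lemma NI_mono: "BS x \<subseteq> BS y \<Longrightarrow> NI x c \<le> NI y c"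
  unfolding NI_def by (intro nn_integral_mono) (auto split: split_indicator)

lemma NI_tri: "NI x c \<le> NI x c' + ennreal (cmod (c' - c) * m x)"
proof -
  have "NI x c \<le> (\<integral>\<^sup>+ \<omega>. ennreal (cmod (b \<omega> - c')) * indicator (BS x) \<omega> + ennreal (cmod (c' - c)) * indicator (BS x) \<omega> \<partial>\<nu>)"
    unfolding NI_def
  proof (intro nn_integral_mono)
    fix \<omega>
    have "cmod (b \<omega> - c) \<le> cmod (b \<omega> - c') + cmod (c' - c)"
      using norm_triangle_ineq[of "b \<omega> - c'" "c' - c"] by simp
    then show "ennreal (cmod (b \<omega> - c)) * indicator (BS x) \<omega> \<le> ennreal (cmod (b \<omega> - c')) * indicator (BS x) \<omega> + ennreal (cmod (c' - c)) * indicator (BS x) \<omega>"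
      by (auto split: split_indicator simp: ennreal_plus[symmetric] ennreal_leI simp del: ennreal_plus)
  qed
  also have "\<dots> = NI x c' + (\<integral>\<^sup>+ \<omega>. ennreal (cmod (c' - c)) * indicator (BS x) \<omega> \<partial>\<nu>)"
    unfolding NI_def by (rule nn_integral_add) auto
  also have "(\<integral>\<^sup>+ \<omega>. ennreal (cmod (c' - c)) * indicator (BS x) \<omega> \<partial>\<nu>) = ennreal (cmod (c' - c) * m x)"
    by (subst nn_integral_cmult_indicator) (simp_all only: BS_sets em_eq ennreal_mult[OF norm_ge_zero less_imp_le[OF m_pos]])
  finally show ?thesis .
qed

lemma avg_step: "cmod (ab x - ab (p x)) \<le> D * B"
proof -
  have "ennreal (cmod (ab x - ab (p x)) * m x) \<le> NI x (ab (p x))" by (rule NI_ge)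
  also have "\<dots> \<le> NI (p x) (ab (p x))" using bsector_sub_p by (rule NI_mono)
  also have "\<dots> \<le> ennreal (B * m (p x))" by (rule NI_avg)
  also have "\<dots> \<le> ennreal (B * (D * m x))" using D_step[of x] B_nonneg
    by (intro ennreal_leI mult_left_mono) auto
  finally have "cmod (ab x - ab (p x)) * m x \<le> D * B * m x"
    using B_nonneg D_gt1 m_pos[of x] by (subst (asm) ennreal_le_iff) (auto simp: mult_ac)
  then show ?thesis using m_pos[of x] by simp
qed

lemma avg_pow: "cmod (ab ((p ^^ k) v) - ab v) \<le> real k * D * B"
proof (induction k)
  case 0 then show ?case by simp
next
  case (Suc k)
  have "cmod (ab ((p ^^ Suc k) v) - ab v) \<le> cmod (ab ((p ^^ Suc k) v) - ab ((p ^^ k) v)) + cmod (ab ((p ^^ k) v) - ab v)"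
    using norm_triangle_ineq[of "ab ((p ^^ Suc k) v) - ab ((p ^^ k) v)" "ab ((p ^^ k) v) - ab v"] by simp
  also have "cmod (ab ((p ^^ Suc k) v) - ab ((p ^^ k) v)) \<le> D * B"
    using avg_step[of "(p ^^ k) v"] by (simp add: norm_minus_commute)
  finally show ?case using Suc by (simp add: algebra_simps)
qed

lemma NI_pow: "NI ((p ^^ k) v) (ab v) \<le> ennreal (m ((p ^^ k) v) * (B + real k * D * B))"
proof -
  let ?w = "(p ^^ k) v"
  have "NI ?w (ab v) \<le> NI ?w (ab ?w) + ennreal (cmod (ab ?w - ab v) * m ?w)" by (rule NI_tri)
  also have "\<dots> \<le> ennreal (B * m ?w) + ennreal (real k * D * B * m ?w)"
    using NI_avg avg_pow[of k v] m_pos[of ?w] by (intro add_mono ennreal_leI) auto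
  also have "\<dots> = ennreal (m ?w * (B + real k * D * B))"
    using B_nonneg D_gt1 m_pos[of ?w] by (subst ennreal_plus[symmetric]) (auto simp: algebra_simps)
  finally show ?thesis .
qed

end

context S begin

definition Sa where "Sa \<alpha> = 1 / (1 - \<delta> powr \<alpha>)"

lemma r_bounds: assumes "\<alpha> > 0" shows "0 < \<delta> powr \<alpha>" "\<delta> powr \<alpha> < 1"
  using delta_bounds assms powr_less_mono2[of \<alpha> \<delta> 1] by auto

lemma Sa_pos: "\<alpha> > 0 \<Longrightarrow> Sa \<alpha> > 0"
  unfolding Sa_def using r_bounds by simp

lemma geo_sum: assumes "\<alpha> > 0" "finite J" shows "(\<Sum>j\<in>J. (\<delta> powr \<alpha>) ^ j) \<le> Sa \<alpha>"
proof -
  have s: "summable (\<lambda>j. (\<delta> powr \<alpha>) ^ j)" using r_bounds[OF assms(1)] by (intro summable_geometric) simp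
  have "(\<Sum>j\<in>J. (\<delta> powr \<alpha>) ^ j) \<le> (\<Sum>j. (\<delta> powr \<alpha>) ^ j)"
    by (rule sum_le_suminf[OF s assms(2)]) (use r_bounds[OF assms(1)] in simp)
  also have "\<dots> = Sa \<alpha>" unfolding Sa_def using r_bounds[OF assms(1)] by (intro suminf_geometric) simp
  finally show ?thesis .
qed

lemma sector_iff: "x \<in> sector p v \<longleftrightarrow> (\<exists>k. (p ^^ k) x = v)"
  unfolding sector_def vle_def by simp

lemma m_powr_chain: assumes "\<alpha> > 0" "(p ^^ j) x = v" shows "m x powr \<alpha> \<le> (\<delta> powr \<alpha>) ^ j * m v powr \<alpha>"
proof -
  have "m x powr \<alpha> = (m x / m v) powr \<alpha> * m v powr \<alpha>"
    using m_pos[of x] m_pos[of v] by (simp add: powr_divide)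
  also have "\<dots> \<le> (\<delta> powr \<alpha>) ^ j * m v powr \<alpha>"
    using m_ratio_powr[OF assms(1), of x j] assms(2) by (intro mult_right_mono) auto
  finally show ?thesis .
qed

lemma pointwise_chain: assumes a: "\<alpha> > 0" and F: "finite F" "F \<subseteq> sector p v"
  shows "(\<Sum>x\<in>F. m x powr \<alpha> * indicator (BS x) g) \<le> Sa \<alpha> * m v powr \<alpha> * indicator (BS v) g"
proof (cases "g \<in> BS v")
  case False
  have "indicator (BS x) g = (0::real)" if xF: "x \<in> F" for x
  proof -
    obtain k where "(p ^^ k) x = v" using F xF sector_iff by blast
    then show ?thesis using False bsector_pow[of g x k] by (auto split: split_indicator)
  qed
  then show ?thesis using False by simp
next
  case True
  then have g: "g \<in> BD" unfolding bsector_def by auto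
  let ?F = "{x\<in>F. g \<in> BS x}"
  define jj where "jj x = nat (L v - L x)" for x
  have chain: "(p ^^ jj x) x = v" if xF: "x \<in> F" for x
  proof -
    obtain k where k: "(p ^^ k) x = v" using F xF sector_iff by blast
    have "L v = L x + int k" using lev_funpow[of k x] k by simp
    then have "jj x = k" unfolding jj_def by simp
    then show ?thesis using k by simp
  qed
  have inj: "inj_on jj ?F"
  proof (rule inj_onI)
    fix x y assume xy: "x \<in> ?F" "y \<in> ?F" "jj x = jj y"
    have "L x = L v - int (jj x)" using chain[of x] xy lev_funpow[of "jj x" x] by auto
    moreover have "L y = L v - int (jj y)" using chain[of y] xy lev_funpow[of "jj y" y] by auto
    ultimately have "L x = L y" using xy by simp
    moreover have "g (L x) = x" using bsector_iff[of g x] xy(1) by blast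
    moreover have "g (L y) = y" using bsector_iff[of g y] xy(2) by blast
    ultimately show "x = y" by metis
  qed
  have "(\<Sum>x\<in>F. m x powr \<alpha> * indicator (BS x) g) = (\<Sum>x\<in>?F. m x powr \<alpha>)"
  proof -
    have "(\<Sum>x\<in>F. m x powr \<alpha> * indicator (BS x) g) = (\<Sum>x\<in>F. if g \<in> BS x then m x powr \<alpha> else 0)"
      by (intro sum.cong) (auto split: split_indicator)
    also have "\<dots> = (\<Sum>x\<in>?F. m x powr \<alpha>)"
      using F(1) by (rule sum.inter_filter[symmetric])
    finally show ?thesis .
  qed
  also have "\<dots> \<le> (\<Sum>x\<in>?F. (\<delta> powr \<alpha>) ^ jj x * m v powr \<alpha>)"
    using m_powr_chain[OF a] chain by (intro sum_mono) auto
  also have "\<dots> = (\<Sum>j\<in>jj ` ?F. (\<delta> powr \<alpha>) ^ j) * m v powr \<alpha>"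
    using inj by (simp add: sum.reindex sum_distrib_right)
  also have "\<dots> \<le> Sa \<alpha> * m v powr \<alpha>"
    using geo_sum[OF a] F(1) by (intro mult_right_mono) auto
  finally show ?thesis using True by simp
qed

lemma int_ind': "integrable \<nu> (\<lambda>\<omega>. indicator (BS x) \<omega> :: real)"
  using em_fin[of x] by (intro integrable_real_indicator) auto

lemma int_ind_val': "integral\<^sup>L \<nu> (\<lambda>\<omega>. indicator (BS x) \<omega> :: real) = m x"
proof -
  have "BS x \<inter> space \<nu> = BS x" using space_nu unfolding bsector_def by auto
  then show ?thesis unfolding m_nu_def by simp
qed

lemma m_powr_succ: "m x powr (\<alpha> + 1) = m x powr \<alpha> * m x"
  using m_pos[of x] by (simp add: powr_add)

lemma int_cind: "integral\<^sup>L \<nu> (\<lambda>g. c * indicator (BS x) g) = c * m x"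
  using int_ind_val'[of x] by simp

lemma sum_m_powr: assumes a: "\<alpha> > 0" and F: "finite F" "F \<subseteq> sector p v"
  shows "(\<Sum>x\<in>F. m x powr (\<alpha> + 1)) \<le> Sa \<alpha> * m v powr (\<alpha> + 1)"
proof -
  have "(\<Sum>x\<in>F. m x powr (\<alpha> + 1)) = (\<Sum>x\<in>F. integral\<^sup>L \<nu> (\<lambda>g. m x powr \<alpha> * indicator (BS x) g))"
    by (intro sum.cong) (simp_all only: int_cind m_powr_succ)
  also have "\<dots> = integral\<^sup>L \<nu> (\<lambda>g. \<Sum>x\<in>F. m x powr \<alpha> * indicator (BS x) g)"
    using int_ind' by (intro Bochner_Integration.integral_sum[symmetric]) auto
  also have "\<dots> \<le> integral\<^sup>L \<nu> (\<lambda>g. Sa \<alpha> * m v powr \<alpha> * indicator (BS v) g)"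
    using int_ind' pointwise_chain[OF a F] by (intro integral_mono) auto
  also have "\<dots> = Sa \<alpha> * m v powr (\<alpha> + 1)"
    by (subst int_cind) (simp add: m_powr_succ mult.assoc)
  finally show ?thesis .
qed

end

lemma ratio_summable:
  fixes r D :: real assumes r: "0 < r" "r < 1" and D: "D > 0"
  shows "summable (\<lambda>n. r ^ n * (1 + real n * D))"
proof (rule summable_ratio_test[where c = "(1 + r) / 2" and N = "nat \<lceil>2 * (r * D + 1) / ((1 - r) * D)\<rceil>"])
  show "(1 + r) / 2 < 1" using r by simp
  fix n assume n: "nat \<lceil>2 * (r * D + 1) / ((1 - r) * D)\<rceil> \<le> n"
  then have "2 * (r * D + 1) / ((1 - r) * D) \<le> real n" by linarith
  then have h: "2 * (r * D + 1) \<le> real n * ((1 - r) * D)" using r D by (simp add: divide_le_eq)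
  have key: "r * (1 + real (Suc n) * D) \<le> (1 + r) / 2 * (1 + real n * D)"
    using h r D by (simp add: algebra_simps)
  have "r ^ Suc n * (1 + real (Suc n) * D) = r ^ n * (r * (1 + real (Suc n) * D))" by simp
  also have "\<dots> \<le> r ^ n * ((1 + r) / 2 * (1 + real n * D))"
    using key r by (intro mult_left_mono) auto
  finally show "norm (r ^ Suc n * (1 + real (Suc n) * D)) \<le> (1 + r) / 2 * norm (r ^ n * (1 + real n * D))"
    using r D by (simp add: mult_ac)
qed

context SB begin

definition Q where "Q \<alpha> = (\<Sum>k. (\<delta> powr \<alpha>) ^ k * (1 + real k * D))"

lemma Q_summable: "\<alpha> > 0 \<Longrightarrow> summable (\<lambda>k. (\<delta> powr \<alpha>) ^ k * (1 + real k * D))"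
  using r_bounds D_gt1 by (intro ratio_summable) auto

lemma Q_nonneg: "\<alpha> > 0 \<Longrightarrow> Q \<alpha> \<ge> 0"
  unfolding Q_def using Q_summable D_gt1 by (intro suminf_nonneg) auto

definition ck where "ck \<alpha> v k = (m v / m ((p ^^ k) v)) powr \<alpha> / m ((p ^^ k) v)"

lemma ck_nonneg: "ck \<alpha> v k \<ge> 0"
  unfolding ck_def using m_pos[of "(p ^^ k) v"] by (intro divide_nonneg_pos) auto

lemma tail: assumes a: "\<alpha> > 0"
  shows "(\<integral>\<^sup>+ \<omega>. (\<Sum>k. ennreal (ck \<alpha> v k) * (ennreal (cmod (b \<omega> - ab v)) * indicator (BS ((p ^^ k) v)) \<omega>)) \<partial>\<nu>)
     \<le> ennreal (B * Q \<alpha>)"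
proof -
  have "(\<integral>\<^sup>+ \<omega>. (\<Sum>k. ennreal (ck \<alpha> v k) * (ennreal (cmod (b \<omega> - ab v)) * indicator (BS ((p ^^ k) v)) \<omega>)) \<partial>\<nu>)
     = (\<Sum>k. \<integral>\<^sup>+ \<omega>. ennreal (ck \<alpha> v k) * (ennreal (cmod (b \<omega> - ab v)) * indicator (BS ((p ^^ k) v)) \<omega>) \<partial>\<nu>)"
    by (rule nn_integral_suminf) measurable
  also have "\<dots> = (\<Sum>k. ennreal (ck \<alpha> v k) * NI ((p ^^ k) v) (ab v))"
    unfolding NI_def by (subst nn_integral_cmult) auto
  also have "\<dots> \<le> (\<Sum>k. ennreal (B * ((\<delta> powr \<alpha>) ^ k * (1 + real k * D))))"
  proof (intro suminf_le allI)
    fix k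
    let ?w = "(p ^^ k) v"
    have "ennreal (ck \<alpha> v k) * NI ?w (ab v) \<le> ennreal (ck \<alpha> v k) * ennreal (m ?w * (B + real k * D * B))"
      using NI_pow by (intro mult_left_mono) auto
    also have "\<dots> = ennreal ((m v / m ?w) powr \<alpha> * (B * (1 + real k * D)))"
    proof -
      have e: "ck \<alpha> v k * (m ?w * (B + real k * D * B)) = (m v / m ?w) powr \<alpha> * (B * (1 + real k * D))"
        using m_pos[of ?w] unfolding ck_def by (simp add: field_simps)
      have "0 \<le> m ?w * (B + real k * D * B)" using m_pos[of ?w] B_nonneg D_gt1 by simp
      then show ?thesis using ck_nonneg[of \<alpha> v k] e by (simp add: ennreal_mult[symmetric])
    qed
    also have "\<dots> \<le> ennreal ((\<delta> powr \<alpha>) ^ k * (B * (1 + real k * D)))"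
      using m_ratio_powr[OF a, of v k] B_nonneg D_gt1
      by (intro ennreal_leI mult_right_mono) auto
    finally show "ennreal (ck \<alpha> v k) * NI ?w (ab v) \<le> ennreal (B * ((\<delta> powr \<alpha>) ^ k * (1 + real k * D)))"
      by (simp add: mult_ac)
  qed auto
  also have "\<dots> = ennreal (\<Sum>k. B * ((\<delta> powr \<alpha>) ^ k * (1 + real k * D)))"
    using Q_summable[OF a] B_nonneg D_gt1 r_bounds[OF a]
    by (intro suminf_ennreal2) (auto intro: summable_mult)
  also have "(\<Sum>k. B * ((\<delta> powr \<alpha>) ^ k * (1 + real k * D))) = B * Q \<alpha>"
    unfolding Q_def using Q_summable[OF a] by (rule suminf_mult)
  finally show ?thesis .
qed

end

lemma ennreal_term_le_suminf: "(f :: nat \<Rightarrow> ennreal) k \<le> suminf f"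
  using sum_le_suminf[OF summableI, of "{k}" f] by simp

context SB begin

lemma ck_eq2: "ck \<alpha> x k = m x powr \<alpha> / m ((p ^^ k) x) powr (\<alpha> + 1)"
proof -
  have 1: "(m x / m ((p ^^ k) x)) powr \<alpha> = m x powr \<alpha> / m ((p ^^ k) x) powr \<alpha>"
    using m_pos[of x] m_pos[of "(p ^^ k) x"] by (intro powr_divide)
  show ?thesis by (simp only: ck_def 1 m_powr_succ[of "(p ^^ k) x"] divide_divide_eq_left)
qed

lemma ck_eq: "m v * ck \<alpha> v k = m v powr (\<alpha> + 1) / m ((p ^^ k) v) powr (\<alpha> + 1)"
  unfolding ck_eq2 m_powr_succ[of v \<alpha>] by (simp only: times_divide_eq_right mult.commute)

lemma K_meas: "A1 \<nu> K \<Longrightarrow> K x \<in> borel_measurable \<nu>"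
  unfolding A1_def by (blast intro: borel_measurable_integrable)

lemma K_bound: assumes "A3 o' p \<nu> K \<alpha>" "\<omega> \<in> BD"
  shows "cmod (K x \<omega>) \<le> ck \<alpha> x (kk x \<omega>)"
  using assms unfolding A3_def ck_eq2 conf_kk by blast

lemma in_kk: "\<omega> \<in> BD \<Longrightarrow> \<omega> \<in> BS ((p ^^ kk x \<omega>) x)"
  using kk_iff by blast

lemma intK_aux: assumes O: "in_class_O o' p \<nu> K" and A: "A3 o' p \<nu> K \<alpha>"
  shows "integrable \<nu> (\<lambda>\<omega>. K x \<omega> * (b \<omega> - c))"
proof -
  have a: "\<alpha> > 0" using A unfolding A3_def by blast
  have A1: "A1 \<nu> K" using O unfolding in_class_O_def by blast
  have [measurable]: "K x \<in> borel_measurable \<nu>" using K_meas[OF A1] .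
  have i1: "integrable \<nu> (\<lambda>\<omega>. K x \<omega> * (b \<omega> - ab x))"
  proof (rule integrableI_bounded)
    show "(\<lambda>\<omega>. K x \<omega> * (b \<omega> - ab x)) \<in> borel_measurable \<nu>" by measurable
    have "(\<integral>\<^sup>+ \<omega>. ennreal (norm (K x \<omega> * (b \<omega> - ab x))) \<partial>\<nu>)
      \<le> (\<integral>\<^sup>+ \<omega>. (\<Sum>k. ennreal (ck \<alpha> x k) * (ennreal (cmod (b \<omega> - ab x)) * indicator (BS ((p ^^ k) x)) \<omega>)) \<partial>\<nu>)"
    proof (rule nn_integral_mono)
      fix \<omega> assume "\<omega> \<in> space \<nu>"
      then have \<omega>: "\<omega> \<in> BD" using space_nu by simp
      let ?k = "kk x \<omega>"
      have "ennreal (norm (K x \<omega> * (b \<omega> - ab x))) = ennreal (cmod (K x \<omega>) * cmod (b \<omega> - ab x))"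
        by (simp add: norm_mult)
      also have "\<dots> \<le> ennreal (ck \<alpha> x ?k * cmod (b \<omega> - ab x))"
        using K_bound[OF A \<omega>] by (intro ennreal_leI mult_right_mono) auto
      also have "\<dots> = ennreal (ck \<alpha> x ?k) * (ennreal (cmod (b \<omega> - ab x)) * indicator (BS ((p ^^ ?k) x)) \<omega>)"
        using in_kk[OF \<omega>, of x] ck_nonneg[of \<alpha> x ?k] by (simp add: ennreal_mult)
      also have "\<dots> \<le> (\<Sum>k. ennreal (ck \<alpha> x k) * (ennreal (cmod (b \<omega> - ab x)) * indicator (BS ((p ^^ k) x)) \<omega>))"
        by (rule ennreal_term_le_suminf)
      finally show "ennreal (norm (K x \<omega> * (b \<omega> - ab x))) \<le> \<dots>" .
    qed
    also have "\<dots> \<le> ennreal (B * Q \<alpha>)" by (rule tail[OF a])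
    finally have X: "(\<integral>\<^sup>+ \<omega>. ennreal (norm (K x \<omega> * (b \<omega> - ab x))) \<partial>\<nu>) \<le> ennreal (B * Q \<alpha>)" .
    show "(\<integral>\<^sup>+ \<omega>. ennreal (norm (K x \<omega> * (b \<omega> - ab x))) \<partial>\<nu>) < \<infinity>"
      by (rule order.strict_trans1[OF X]) simp
  qed
  have iK: "integrable \<nu> (K x)" using A1 unfolding A1_def by blast
  have i2: "integrable \<nu> (\<lambda>\<omega>. (ab x - c) * K x \<omega>)"
    using iK by (rule integrable_mult_right)
  have "integrable \<nu> (\<lambda>\<omega>. K x \<omega> * (b \<omega> - ab x) + (ab x - c) * K x \<omega>)"
    using i1 i2 by (rule Bochner_Integration.integrable_add)
  moreover have "(\<lambda>\<omega>. K x \<omega> * (b \<omega> - ab x) + (ab x - c) * K x \<omega>) = (\<lambda>\<omega>. K x \<omega> * (b \<omega> - c))"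
    by (simp add: algebra_simps)
  ultimately show ?thesis by simp
qed

lemma intK: assumes "in_class_O o' p \<nu> K" "A3 o' p \<nu> K \<alpha>"
  shows "integrable \<nu> (\<lambda>\<omega>. K x \<omega> * b \<omega>)"
  using intK_aux[OF assms, of x 0] by simp

lemma Kop_eq: assumes O: "in_class_O o' p \<nu> K" and A: "A3 o' p \<nu> K \<alpha>"
  shows "Kop \<nu> K b x = integral\<^sup>L \<nu> (\<lambda>\<omega>. K x \<omega> * (b \<omega> - c))"
proof -
  have A1: "integrable \<nu> (K x)" "integral\<^sup>L \<nu> (K x) = 0" using O unfolding in_class_O_def A1_def by blast+
  have "(\<lambda>\<omega>. K x \<omega> * (b \<omega> - c)) = (\<lambda>\<omega>. K x \<omega> * b \<omega> - c * K x \<omega>)"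
    by (simp add: algebra_simps)
  then have "integral\<^sup>L \<nu> (\<lambda>\<omega>. K x \<omega> * (b \<omega> - c)) = Kop \<nu> K b x - c * integral\<^sup>L \<nu> (K x)"
    using intK[OF O A, of x] A1(1) unfolding Kop_def
    by (simp add: Bochner_Integration.integral_diff)
  then show ?thesis using A1(2) by simp
qed

end

lemma ennreal_sum_le_infsum: "finite F \<Longrightarrow> F \<subseteq> A \<Longrightarrow> sum (f :: _ \<Rightarrow> ennreal) F \<le> infsum f A"
  by (simp add: nonneg_infsum_complete) (rule SUP_upper, auto)

context SB begin

lemma main: assumes O: "in_class_O o' p \<nu> K" and A: "A3 o' p \<nu> K \<alpha>"
  shows "(\<Sum>\<^sub>\<infinity>x\<in>sector p v. ennreal (cmod (Kop \<nu> K b x) * m x))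
     \<le> ennreal ((B * enn2real (C_K o' p \<nu> K) + B * Sa \<alpha> * Q \<alpha>) * m v)"
proof -
  have a: "\<alpha> > 0" using A unfolding A3_def by blast
  have A1K: "A1 \<nu> K" using O unfolding in_class_O_def by blast
  have Km[measurable]: "K x \<in> borel_measurable \<nu>" for x using K_meas[OF A1K] .
  define CK where "CK = C_K o' p \<nu> K"
  have CKfin: "CK \<noteq> \<top>" using O unfolding CK_def in_class_O_def A2_def by auto
  define cK where "cK = enn2real CK"
  have CKe: "CK = ennreal cK" unfolding cK_def using CKfin ennreal_enn2real[of CK] by (simp add: less_top)
  have cK0: "cK \<ge> 0" unfolding cK_def by simp
  define c where "c = ab v"
  have AEb: "AE \<omega> in \<nu>. (\<Sum>\<^sub>\<infinity>x\<in>UNIV. ennreal (cmod (K x \<omega>) * m x)) \<le> CK"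
    unfolding CK_def C_K_def by (rule esssup_AE)
  define R where "R \<omega> = CK * (ennreal (cmod (b \<omega> - c)) * indicator (BS v) \<omega>) +
     ennreal (Sa \<alpha> * m v) * (\<Sum>k. ennreal (ck \<alpha> v k) * (ennreal (cmod (b \<omega> - c)) * indicator (BS ((p ^^ k) v)) \<omega>))" for \<omega>
  have intR: "(\<integral>\<^sup>+ \<omega>. R \<omega> \<partial>\<nu>) \<le> ennreal ((B * cK + B * Sa \<alpha> * Q \<alpha>) * m v)"
  proof -
    have "(\<integral>\<^sup>+ \<omega>. R \<omega> \<partial>\<nu>) = (\<integral>\<^sup>+ \<omega>. CK * (ennreal (cmod (b \<omega> - c)) * indicator (BS v) \<omega>) \<partial>\<nu>) +
       (\<integral>\<^sup>+ \<omega>. ennreal (Sa \<alpha> * m v) * (\<Sum>k. ennreal (ck \<alpha> v k) * (ennreal (cmod (b \<omega> - c)) * indicator (BS ((p ^^ k) v)) \<omega>)) \<partial>\<nu>)"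
      unfolding R_def by (rule nn_integral_add) measurable
    also have "\<dots> = CK * NI v c + ennreal (Sa \<alpha> * m v) * (\<integral>\<^sup>+ \<omega>. (\<Sum>k. ennreal (ck \<alpha> v k) * (ennreal (cmod (b \<omega> - c)) * indicator (BS ((p ^^ k) v)) \<omega>)) \<partial>\<nu>)"
      unfolding NI_def by (subst nn_integral_cmult, measurable)+
    also have "\<dots> \<le> ennreal cK * ennreal (B * m v) + ennreal (Sa \<alpha> * m v) * ennreal (B * Q \<alpha>)"
      unfolding CKe c_def by (intro add_mono mult_left_mono NI_avg tail[OF a]) auto
    also have "\<dots> = ennreal ((B * cK + B * Sa \<alpha> * Q \<alpha>) * m v)"
      using cK0 B_nonneg m_pos[of v] Sa_pos[OF a] Q_nonneg[OF a]
      by (simp add: ennreal_mult[symmetric] ennreal_plus[symmetric] algebra_simps del: ennreal_plus)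
    finally show ?thesis .
  qed
  have pt: "AE \<omega> in \<nu>. \<forall>F. finite F \<and> F \<subseteq> sector p v \<longrightarrow>
      (\<Sum>x\<in>F. ennreal (m x) * (ennreal (cmod (K x \<omega>)) * ennreal (cmod (b \<omega> - c)))) \<le> R \<omega>"
    using AEb AE_space
  proof eventually_elim
    case (elim \<omega>)
    have \<omega>: "\<omega> \<in> BD" using elim(2) space_nu by simp
    show ?case
    proof (intro allI impI)
      fix F assume F: "finite F \<and> F \<subseteq> sector p v"
      let ?E = "ennreal (cmod (b \<omega> - c))"
      have SF: "(\<Sum>x\<in>F. ennreal (m x) * (ennreal (cmod (K x \<omega>)) * ?E)) = (\<Sum>x\<in>F. ennreal (cmod (K x \<omega>) * m x)) * ?E"
        unfolding sum_distrib_right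
        by (intro sum.cong refl) (simp add: ennreal_mult' mult_ac)
      show "(\<Sum>x\<in>F. ennreal (m x) * (ennreal (cmod (K x \<omega>)) * ?E)) \<le> R \<omega>"
      proof (cases "\<omega> \<in> BS v")
        case True
        have "(\<Sum>x\<in>F. ennreal (cmod (K x \<omega>) * m x)) \<le> (\<Sum>\<^sub>\<infinity>x\<in>UNIV. ennreal (cmod (K x \<omega>) * m x))"
          using F by (intro ennreal_sum_le_infsum) auto
        also have "\<dots> \<le> CK" using elim(1) .
        finally have "(\<Sum>x\<in>F. ennreal (m x) * (ennreal (cmod (K x \<omega>)) * ?E)) \<le> CK * ?E"
          unfolding SF by (rule mult_right_mono) simp
        also have "\<dots> = CK * (?E * indicator (BS v) \<omega>)" using True by simp
        also have "\<dots> \<le> R \<omega>" unfolding R_def by (rule add_increasing2) auto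
        finally show ?thesis .
      next
        case False
        define k0 where "k0 = kk v \<omega>"
        define w where "w = (p ^^ k0) v"
        have wconf: "conf_vb p x \<omega> = w" if xF: "x \<in> F" for x
        proof -
          obtain j where "(p ^^ j) x = v" using F xF sector_iff by blast
          then have "conf_vb p x \<omega> = conf_vb p v \<omega>" using conf_out[OF \<omega> _ False] by blast
          then show ?thesis unfolding w_def k0_def conf_kk .
        qed
        have Kb: "cmod (K x \<omega>) * m x \<le> m x powr (\<alpha> + 1) / m w powr (\<alpha> + 1)" if "x \<in> F" for x
        proof -
          have "cmod (K x \<omega>) \<le> m x powr \<alpha> / m w powr (\<alpha> + 1)"
            using A \<omega> wconf[OF that] unfolding A3_def by metis
          then have "cmod (K x \<omega>) * m x \<le> m x powr \<alpha> / m w powr (\<alpha> + 1) * m x"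
            using m_pos[of x] by (intro mult_right_mono) auto
          also have "\<dots> = m x powr (\<alpha> + 1) / m w powr (\<alpha> + 1)" by (simp add: m_powr_succ)
          finally show ?thesis .
        qed
        have r1: "(\<Sum>x\<in>F. ennreal (cmod (K x \<omega>) * m x)) \<le> ennreal (\<Sum>x\<in>F. m x powr (\<alpha> + 1) / m w powr (\<alpha> + 1))"
        proof -
          have "(\<Sum>x\<in>F. ennreal (cmod (K x \<omega>) * m x)) \<le> (\<Sum>x\<in>F. ennreal (m x powr (\<alpha> + 1) / m w powr (\<alpha> + 1)))"
            using Kb by (intro sum_mono ennreal_leI) auto
          also have "\<dots> = ennreal (\<Sum>x\<in>F. m x powr (\<alpha> + 1) / m w powr (\<alpha> + 1))"
            by (rule sum_ennreal) simp
          finally show ?thesis .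
        qed
        have r2: "(\<Sum>x\<in>F. m x powr (\<alpha> + 1) / m w powr (\<alpha> + 1)) \<le> Sa \<alpha> * m v * ck \<alpha> v k0"
        proof -
          have "(\<Sum>x\<in>F. m x powr (\<alpha> + 1) / m w powr (\<alpha> + 1)) = (\<Sum>x\<in>F. m x powr (\<alpha> + 1)) / m w powr (\<alpha> + 1)"
            by (simp add: sum_divide_distrib)
          also have "\<dots> \<le> Sa \<alpha> * m v powr (\<alpha> + 1) / m w powr (\<alpha> + 1)"
            using sum_m_powr[OF a, of F v] F by (intro divide_right_mono) auto
          also have "\<dots> = Sa \<alpha> * m v * ck \<alpha> v k0"
            unfolding w_def mult.assoc ck_eq[of v \<alpha> k0] by (rule times_divide_eq_right[symmetric])
          finally show ?thesis .
        qed
        have "(\<Sum>x\<in>F. ennreal (cmod (K x \<omega>) * m x)) \<le> ennreal (Sa \<alpha> * m v * ck \<alpha> v k0)"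
          using r1 ennreal_leI[OF r2] by (rule order_trans)
        then have "(\<Sum>x\<in>F. ennreal (m x) * (ennreal (cmod (K x \<omega>)) * ?E)) \<le> ennreal (Sa \<alpha> * m v * ck \<alpha> v k0) * ?E"
          unfolding SF by (rule mult_right_mono) simp
        also have "\<dots> = ennreal (Sa \<alpha> * m v) * (ennreal (ck \<alpha> v k0) * (?E * indicator (BS ((p ^^ k0) v)) \<omega>))"
          using in_kk[OF \<omega>, of v] Sa_pos[OF a] m_pos[of v] ck_nonneg[of \<alpha> v k0]
          unfolding k0_def by (simp add: ennreal_mult mult_ac)
        also have "\<dots> \<le> ennreal (Sa \<alpha> * m v) * (\<Sum>k. ennreal (ck \<alpha> v k) * (?E * indicator (BS ((p ^^ k) v)) \<omega>))"
          by (intro mult_left_mono ennreal_term_le_suminf) simp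
        also have "\<dots> \<le> R \<omega>" unfolding R_def by (rule add_increasing) auto
        finally show ?thesis .
      qed
    qed
  qed
  have "(\<Sum>\<^sub>\<infinity>x\<in>sector p v. ennreal (cmod (Kop \<nu> K b x) * m x)) \<le> ennreal ((B * cK + B * Sa \<alpha> * Q \<alpha>) * m v)"
  proof (rule infsum_le_finite_sums)
    show "(\<lambda>x. ennreal (cmod (Kop \<nu> K b x) * m x)) summable_on sector p v" by (rule nonneg_summable_on_complete) simp
    fix F assume F: "finite F" "F \<subseteq> sector p v"
    have "(\<Sum>x\<in>F. ennreal (cmod (Kop \<nu> K b x) * m x)) \<le>
        (\<Sum>x\<in>F. \<integral>\<^sup>+ \<omega>. ennreal (m x) * (ennreal (cmod (K x \<omega>)) * ennreal (cmod (b \<omega> - c))) \<partial>\<nu>)"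
    proof (intro sum_mono)
      fix x
      have "ennreal (cmod (Kop \<nu> K b x)) \<le> (\<integral>\<^sup>+ \<omega>. norm (K x \<omega> * (b \<omega> - c)) \<partial>\<nu>)"
        unfolding Kop_eq[OF O A, of x c] by (rule integral_norm_bound_ennreal[OF intK_aux[OF O A]])
      also have "\<dots> = (\<integral>\<^sup>+ \<omega>. ennreal (cmod (K x \<omega>)) * ennreal (cmod (b \<omega> - c)) \<partial>\<nu>)"
        by (simp add: norm_mult ennreal_mult)
      finally have "ennreal (m x) * ennreal (cmod (Kop \<nu> K b x)) \<le> ennreal (m x) * (\<integral>\<^sup>+ \<omega>. ennreal (cmod (K x \<omega>)) * ennreal (cmod (b \<omega> - c)) \<partial>\<nu>)"
        by (rule mult_left_mono) simp
      also have "\<dots> = (\<integral>\<^sup>+ \<omega>. ennreal (m x) * (ennreal (cmod (K x \<omega>)) * ennreal (cmod (b \<omega> - c))) \<partial>\<nu>)"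
        by (rule nn_integral_cmult[symmetric]) measurable
      finally show "ennreal (cmod (Kop \<nu> K b x) * m x) \<le> \<dots>"
        using m_pos[of x] by (simp add: ennreal_mult mult.commute)
    qed
    also have "\<dots> = (\<integral>\<^sup>+ \<omega>. (\<Sum>x\<in>F. ennreal (m x) * (ennreal (cmod (K x \<omega>)) * ennreal (cmod (b \<omega> - c)))) \<partial>\<nu>)"
      by (rule nn_integral_sum[symmetric]) measurable
    also have "\<dots> \<le> (\<integral>\<^sup>+ \<omega>. R \<omega> \<partial>\<nu>)"
      using pt F by (intro nn_integral_mono_AE) (auto elim!: eventually_mono)
    also have "\<dots> \<le> ennreal ((B * cK + B * Sa \<alpha> * Q \<alpha>) * m v)" by (rule intR)
    finally show "(\<Sum>x\<in>F. ennreal (cmod (Kop \<nu> K b x) * m x)) \<le> ennreal ((B * cK + B * Sa \<alpha> * Q \<alpha>) * m v)" .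
  qed
  then show ?thesis unfolding cK_def CK_def .
qed

end

context S begin

lemma osc_bound:
  fixes f :: "real \<Rightarrow> real \<Rightarrow> real"
  assumes f0: "\<forall>c \<alpha>. c \<ge> 0 \<longrightarrow> \<alpha> > 0 \<longrightarrow> f c \<alpha> \<ge> 0"
    and fmono: "\<forall>\<alpha>>0. mono_on {0..} (\<lambda>c. f c \<alpha>)"
    and fK: "\<forall>K \<alpha>. in_class_O o' p \<nu> K \<longrightarrow> A3 o' p \<nu> K \<alpha> \<longrightarrow>
          (\<forall>x. integrable \<nu> (\<lambda>\<omega>. K x \<omega> * b \<omega>)) \<and>
          (\<forall>v. (\<Sum>\<^sub>\<infinity>x\<in>sector p v. ennreal (cmod (Kop \<nu> K b x) * m x))
                 \<le> ennreal (f (enn2real (C_K o' p \<nu> K)) \<alpha> * m v))"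
  shows "(1 / measure \<nu> (BS v)) * (LINT \<omega>:BS v|\<nu>. cmod (b \<omega> - ab v)) \<le> 2 * f 1 1"
proof -
  define z where "z \<omega> = b \<omega> - ab v" for \<omega>
  define s where "s \<omega> = cnj (z \<omega>) / complex_of_real (cmod (z \<omega>))" for \<omega>
  have zm: "z \<in> borel_measurable \<nu>" unfolding z_def by measurable
  have m1[measurable]: "(\<lambda>\<omega>. cnj (z \<omega>)) \<in> borel_measurable \<nu>"
    by (rule borel_measurable_continuous_on[where f="\<lambda>t. cnj t", OF _ zm]) (intro continuous_intros)
  have m2[measurable]: "(\<lambda>\<omega>. complex_of_real (cmod (z \<omega>))) \<in> borel_measurable \<nu>"
    by (rule borel_measurable_continuous_on[where f="\<lambda>t. complex_of_real (cmod t)", OF _ zm]) (intro continuous_intros)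
  have s_meas[measurable]: "s \<in> borel_measurable \<nu>" unfolding s_def by measurable
  have s_mult: "s \<omega> * z \<omega> = complex_of_real (cmod (z \<omega>))" for \<omega>
  proof (cases "z \<omega> = 0")
    case True then show ?thesis unfolding s_def by simp
  next
    case False
    have "s \<omega> * z \<omega> = (z \<omega> * cnj (z \<omega>)) / complex_of_real (cmod (z \<omega>))"
      unfolding s_def by (simp add: mult.commute)
    also have "\<dots> = complex_of_real ((cmod (z \<omega>))\<^sup>2) / complex_of_real (cmod (z \<omega>))"
      by (simp only: complex_norm_square)
    also have "\<dots> = complex_of_real (cmod (z \<omega>))" using False by (simp add: power2_eq_square)
    finally show ?thesis .
  qed
  have s_norm: "cmod (s \<omega>) \<le> 1" for \<omega>
    unfolding s_def by (simp add: norm_divide divide_le_eq_1)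
  have mv: "m v > 0" using m_pos .
  have int_s: "integrable \<nu> (\<lambda>\<omega>. indicator (BS v) \<omega> *\<^sub>R s \<omega>)"
  proof (rule Bochner_Integration.integrable_bound[OF int_ind[of v]])
    show "(\<lambda>\<omega>. indicator (BS v) \<omega> *\<^sub>R s \<omega>) \<in> borel_measurable \<nu>" by measurable
    show "AE \<omega> in \<nu>. norm (indicator (BS v) \<omega> *\<^sub>R s \<omega>) \<le> norm (indicator (BS v) \<omega> :: real)"
      using s_norm by (auto split: split_indicator)
  qed
  define cs where "cs = (1 / m v) *\<^sub>R integral\<^sup>L \<nu> (\<lambda>\<omega>. indicator (BS v) \<omega> *\<^sub>R s \<omega>)"
  have cs_int: "integral\<^sup>L \<nu> (\<lambda>\<omega>. indicator (BS v) \<omega> *\<^sub>R s \<omega>) = m v *\<^sub>R cs"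
    unfolding cs_def using mv by simp
  have cs_norm: "cmod cs \<le> 1"
  proof -
    have "norm (integral\<^sup>L \<nu> (\<lambda>\<omega>. indicator (BS v) \<omega> *\<^sub>R s \<omega>)) \<le> integral\<^sup>L \<nu> (\<lambda>\<omega>. norm (indicator (BS v) \<omega> *\<^sub>R s \<omega>))"
      by (rule Bochner_Integration.integral_norm_bound)
    also have "\<dots> \<le> integral\<^sup>L \<nu> (\<lambda>\<omega>. indicator (BS v) \<omega> :: real)"
      using Bochner_Integration.integrable_norm[OF int_s] int_ind[of v] s_norm by (intro Bochner_Integration.integral_mono) (auto split: split_indicator)
    also have "\<dots> = m v" by (rule int_ind_val)
    finally show ?thesis unfolding cs_def using mv by (simp add: divide_le_eq_1)
  qed
  define K0 where "K0 x \<omega> = (if x = v then (indicator (BS v) \<omega> / (2 * m v)) *\<^sub>R (s \<omega> - cs) else 0)" for x \<omega>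
  have K0v: "K0 v = (\<lambda>\<omega>. (1 / (2 * m v)) *\<^sub>R (indicator (BS v) \<omega> *\<^sub>R s \<omega> - indicator (BS v) \<omega> *\<^sub>R cs))"
    unfolding K0_def by (intro ext) (simp add: scaleR_right_diff_distrib)
  have K0o: "K0 x = (\<lambda>\<omega>. 0)" if "x \<noteq> v" for x
    unfolding K0_def using that by simp
  have K0_norm: "cmod (K0 v \<omega>) \<le> indicator (BS v) \<omega> / m v" for \<omega>
  proof -
    have "cmod (s \<omega> - cs) \<le> 2" using norm_triangle_ineq4[of "s \<omega>" cs] s_norm[of \<omega>] cs_norm by linarith
    then show ?thesis unfolding K0_def using mv
      by (auto split: split_indicator simp: divide_le_eq)
  qed
  have A1: "A1 \<nu> K0"
    unfolding A1_def
  proof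
    fix x
    show "integrable \<nu> (K0 x) \<and> integral\<^sup>L \<nu> (K0 x) = 0"
    proof (cases "x = v")
      case True
      have i: "integrable \<nu> (K0 v)" unfolding K0v
        by (intro integrable_scaleR_right Bochner_Integration.integrable_diff int_s int_c)
      have ic: "integral\<^sup>L \<nu> (\<lambda>\<omega>. indicator (BS v) \<omega> *\<^sub>R cs) = m v *\<^sub>R cs"
        using int_ind_val[of v] int_ind[of v] by (subst Bochner_Integration.integral_scaleR_left) auto
      have "integral\<^sup>L \<nu> (K0 v) = (1 / (2 * m v)) *\<^sub>R (m v *\<^sub>R cs - m v *\<^sub>R cs)"
        unfolding K0v using int_s int_c[of v cs] ic cs_int
        by (simp add: Bochner_Integration.integral_diff)
      then show ?thesis using i True by simp
    next
      case False then show ?thesis using K0o by simp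
    qed
  qed
  have K0meas[measurable]: "K0 x \<in> borel_measurable \<nu>" for x
    using A1 unfolding A1_def by (blast intro: borel_measurable_integrable)
  have Phi: "(\<lambda>\<omega>. \<Sum>\<^sub>\<infinity>x\<in>UNIV. ennreal (cmod (K0 x \<omega>) * m x)) = (\<lambda>\<omega>. ennreal (cmod (K0 v \<omega>) * m v))"
  proof (rule ext)
    fix \<omega>
    have "(\<Sum>\<^sub>\<infinity>x\<in>UNIV. ennreal (cmod (K0 x \<omega>) * m x)) = (\<Sum>\<^sub>\<infinity>x\<in>{v}. ennreal (cmod (K0 x \<omega>) * m x))"
      by (rule infsum_cong_neutral) (auto simp: K0o)
    then show "(\<Sum>\<^sub>\<infinity>x\<in>UNIV. ennreal (cmod (K0 x \<omega>) * m x)) = ennreal (cmod (K0 v \<omega>) * m v)" by simp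
  qed
  have CK1: "C_K o' p \<nu> K0 \<le> 1"
    unfolding C_K_def Phi
  proof (rule esssup_I)
    show "(\<lambda>\<omega>. ennreal (cmod (K0 v \<omega>) * m v)) \<in> borel_measurable \<nu>" by measurable
    show "AE \<omega> in \<nu>. ennreal (cmod (K0 v \<omega>) * m v) \<le> 1"
    proof (intro AE_I2)
      fix \<omega>
      have "cmod (K0 v \<omega>) * m v \<le> indicator (BS v) \<omega> / m v * m v"
        using K0_norm mv by (intro mult_right_mono) auto
      also have "\<dots> \<le> 1" using mv by (simp split: split_indicator)
      finally show "ennreal (cmod (K0 v \<omega>) * m v) \<le> 1" by (simp add: ennreal_le_1)
    qed
  qed
  have A2: "A2 o' p \<nu> K0" unfolding A2_def using CK1 by (simp add: order_le_less_trans)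
  have A3: "A3 o' p \<nu> K0 1"
    unfolding A3_def
  proof (intro conjI allI ballI)
    fix x \<omega> assume \<omega>: "\<omega> \<in> BD"
    show "cmod (K0 x \<omega>) \<le> m x powr 1 / m (conf_vb p x \<omega>) powr (1 + 1)"
    proof (cases "x = v \<and> \<omega> \<in> BS v")
      case True
      then have "conf_vb p x \<omega> = v" using conf_self by blast
      moreover have "m v powr 1 / m v powr (1 + 1) = 1 / m v"
        using mv by (simp add: m_powr_succ power2_eq_square)
      ultimately show ?thesis using True K0_norm[of \<omega>] by simp
    next
      case False
      then have "K0 x \<omega> = 0" unfolding K0_def by auto
      then show ?thesis by simp
    qed
  qed simp
  have O: "in_class_O o' p \<nu> K0" unfolding in_class_O_def using A1 A2 A3 by blast
  have fKK: "(\<forall>x. integrable \<nu> (\<lambda>\<omega>. K0 x \<omega> * b \<omega>)) \<and>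
          (\<forall>v. (\<Sum>\<^sub>\<infinity>x\<in>sector p v. ennreal (cmod (Kop \<nu> K0 b x) * m x))
                 \<le> ennreal (f (enn2real (C_K o' p \<nu> K0)) 1 * m v))"
    using fK O A3 by blast
  define I where "I = (LINT \<omega>:BS v|\<nu>. cmod (b \<omega> - ab v))"
  have I_eq: "I = integral\<^sup>L \<nu> (\<lambda>\<omega>. norm (indicator (BS v) \<omega> *\<^sub>R z \<omega>))"
    unfolding I_def set_lebesgue_integral_def z_def
    by (rule Bochner_Integration.integral_cong) (auto split: split_indicator)
  have I0: "I \<ge> 0" unfolding I_eq by simp
  have iz: "integrable \<nu> (\<lambda>\<omega>. indicator (BS v) \<omega> *\<^sub>R z \<omega>)" unfolding z_def by (rule int_bc)
  have z0: "integral\<^sup>L \<nu> (\<lambda>\<omega>. indicator (BS v) \<omega> *\<^sub>R z \<omega>) = 0"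
    unfolding z_def int_bc_val by simp
  have Kv: "Kop \<nu> K0 b v = complex_of_real (I / (2 * m v))"
  proof -
    have ib: "integrable \<nu> (\<lambda>\<omega>. K0 v \<omega> * b \<omega>)" using fKK by blast
    have iK: "integrable \<nu> (K0 v)" and zK: "integral\<^sup>L \<nu> (K0 v) = 0" using A1 unfolding A1_def by blast+
    have "Kop \<nu> K0 b v = integral\<^sup>L \<nu> (\<lambda>\<omega>. K0 v \<omega> * b \<omega> - ab v * K0 v \<omega>)"
      using ib iK zK unfolding Kop_def by (simp add: Bochner_Integration.integral_diff)
    also have "(\<lambda>\<omega>. K0 v \<omega> * b \<omega> - ab v * K0 v \<omega>) =
      (\<lambda>\<omega>. (1 / (2 * m v)) *\<^sub>R (complex_of_real (norm (indicator (BS v) \<omega> *\<^sub>R z \<omega>)) - cs * (indicator (BS v) \<omega> *\<^sub>R z \<omega>)))"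
    proof (rule ext)
      fix \<omega>
      have "K0 v \<omega> * b \<omega> - ab v * K0 v \<omega> = (indicator (BS v) \<omega> / (2 * m v)) *\<^sub>R (s \<omega> * z \<omega> - cs * z \<omega>)"
        unfolding K0_def z_def by (simp add: algebra_simps)
      also have "\<dots> = (1 / (2 * m v)) *\<^sub>R (complex_of_real (norm (indicator (BS v) \<omega> *\<^sub>R z \<omega>)) - cs * (indicator (BS v) \<omega> *\<^sub>R z \<omega>))"
        unfolding s_mult by (simp split: split_indicator)
      finally show "K0 v \<omega> * b \<omega> - ab v * K0 v \<omega> = \<dots>" .
    qed
    also have "integral\<^sup>L \<nu> \<dots> = (1 / (2 * m v)) *\<^sub>R (complex_of_real I - cs * 0)"
    proof -
      let ?w = "\<lambda>\<omega>. indicator (BS v) \<omega> *\<^sub>R z \<omega>"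
      have i1: "integrable \<nu> (\<lambda>\<omega>. complex_of_real (norm (?w \<omega>)))"
        using integrable_of_real[OF Bochner_Integration.integrable_norm[OF iz]] by simp
      have i2: "integrable \<nu> (\<lambda>\<omega>. cs * ?w \<omega>)" using iz by (rule integrable_mult_right)
      have "integral\<^sup>L \<nu> (\<lambda>\<omega>. (1 / (2 * m v)) *\<^sub>R (complex_of_real (norm (?w \<omega>)) - cs * ?w \<omega>))
          = (1 / (2 * m v)) *\<^sub>R integral\<^sup>L \<nu> (\<lambda>\<omega>. complex_of_real (norm (?w \<omega>)) - cs * ?w \<omega>)"
        by (rule Bochner_Integration.integral_scaleR_right)
      also have "integral\<^sup>L \<nu> (\<lambda>\<omega>. complex_of_real (norm (?w \<omega>)) - cs * ?w \<omega>)
          = integral\<^sup>L \<nu> (\<lambda>\<omega>. complex_of_real (norm (?w \<omega>))) - integral\<^sup>L \<nu> (\<lambda>\<omega>. cs * ?w \<omega>)"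
        using i1 i2 by (rule Bochner_Integration.integral_diff)
      also have "integral\<^sup>L \<nu> (\<lambda>\<omega>. complex_of_real (norm (?w \<omega>))) = complex_of_real I"
        unfolding I_eq by (rule integral_of_real[OF Bochner_Integration.integrable_norm[OF iz]])
      also have "integral\<^sup>L \<nu> (\<lambda>\<omega>. cs * ?w \<omega>) = cs * 0"
        unfolding z0[symmetric] by (rule integral_mult_right_zero)
      finally show ?thesis .
    qed
    finally show ?thesis by (simp add: scaleR_conv_of_real)
  qed
  have "ennreal (cmod (Kop \<nu> K0 b v) * m v) \<le> (\<Sum>\<^sub>\<infinity>x\<in>sector p v. ennreal (cmod (Kop \<nu> K0 b x) * m x))"
  proof -
    have "v \<in> sector p v" unfolding sector_iff by (rule exI[of _ 0]) simp
    then have "(\<Sum>x\<in>{v}. ennreal (cmod (Kop \<nu> K0 b x) * m x)) \<le> (\<Sum>\<^sub>\<infinity>x\<in>sector p v. ennreal (cmod (Kop \<nu> K0 b x) * m x))"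
      by (intro ennreal_sum_le_infsum) auto
    then show ?thesis by simp
  qed
  also have "\<dots> \<le> ennreal (f (enn2real (C_K o' p \<nu> K0)) 1 * m v)" using fKK by blast
  finally have le1: "cmod (Kop \<nu> K0 b v) * m v \<le> f (enn2real (C_K o' p \<nu> K0)) 1 * m v"
    using f0 mv by (subst (asm) ennreal_le_iff) auto
  have cK01: "enn2real (C_K o' p \<nu> K0) \<le> 1"
    using enn2real_mono[OF CK1] by simp
  have "f (enn2real (C_K o' p \<nu> K0)) 1 \<le> f 1 1"
    using fmono cK01 unfolding mono_on_def by auto
  then have "cmod (Kop \<nu> K0 b v) * m v \<le> f 1 1 * m v" using le1 mv by (smt (verit) mult_right_mono)
  moreover have "cmod (Kop \<nu> K0 b v) = I / (2 * m v)" unfolding Kv norm_of_real using I0 mv by simp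
  ultimately have "I / (2 * m v) * m v \<le> f 1 1 * m v" by simp
  moreover have "I / (2 * m v) * m v = I / 2" using mv by simp
  ultimately have "I / 2 \<le> f 1 1 * m v" by simp
  then have "(1 / m v) * I \<le> 2 * f 1 1" using mv by (simp add: field_simps)
  then show ?thesis unfolding I_def m_nu_def .
qed

end

context SB begin

lemma forward: "\<exists>f :: real \<Rightarrow> real \<Rightarrow> real.
       (\<forall>c \<alpha>. c \<ge> 0 \<longrightarrow> \<alpha> > 0 \<longrightarrow> f c \<alpha> \<ge> 0) \<and>
       (\<forall>\<alpha>>0. mono_on {0..} (\<lambda>c. f c \<alpha>)) \<and>
       (\<forall>K \<alpha>. in_class_O o' p \<nu> K \<longrightarrow> A3 o' p \<nu> K \<alpha> \<longrightarrow>
          (\<forall>x. integrable \<nu> (\<lambda>\<omega>. K x \<omega> * b \<omega>)) \<and>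
          (\<forall>v. (\<Sum>\<^sub>\<infinity>x\<in>sector p v. ennreal (cmod (Kop \<nu> K b x) * m_nu o' p \<nu> x))
                 \<le> ennreal (f (enn2real (C_K o' p \<nu> K)) \<alpha> * m_nu o' p \<nu> v)))"
proof (rule exI[of _ "\<lambda>c \<alpha>. B * c + B * Sa \<alpha> * Q \<alpha>"], intro conjI allI impI)
  fix c \<alpha> :: real assume "c \<ge> 0" "\<alpha> > 0"
  then show "B * c + B * Sa \<alpha> * Q \<alpha> \<ge> 0"
    using B_nonneg Sa_pos Q_nonneg by (intro add_nonneg_nonneg mult_nonneg_nonneg) (auto intro: less_imp_le)
next
  fix \<alpha> :: real assume "\<alpha> > 0"
  show "mono_on {0..} (\<lambda>c. B * c + B * Sa \<alpha> * Q \<alpha>)"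
    by (rule mono_onI) (use B_nonneg in \<open>simp add: mult_left_mono\<close>)
next
  fix K \<alpha> x assume "in_class_O o' p \<nu> K" "A3 o' p \<nu> K \<alpha>"
  then show "integrable \<nu> (\<lambda>\<omega>. K x \<omega> * b \<omega>)" by (rule intK)
next
  fix K \<alpha> v assume "in_class_O o' p \<nu> K" "A3 o' p \<nu> K \<alpha>"
  then show "(\<Sum>\<^sub>\<infinity>x\<in>sector p v. ennreal (cmod (Kop \<nu> K b x) * m x))
      \<le> ennreal ((B * enn2real (C_K o' p \<nu> K) + B * Sa \<alpha> * Q \<alpha>) * m v)" by (rule main)
qed

end

context S begin

lemma backward:
  assumes "\<exists>f :: real \<Rightarrow> real \<Rightarrow> real.
       (\<forall>c \<alpha>. c \<ge> 0 \<longrightarrow> \<alpha> > 0 \<longrightarrow> f c \<alpha> \<ge> 0) \<and>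
       (\<forall>\<alpha>>0. mono_on {0..} (\<lambda>c. f c \<alpha>)) \<and>
       (\<forall>K \<alpha>. in_class_O o' p \<nu> K \<longrightarrow> A3 o' p \<nu> K \<alpha> \<longrightarrow>
          (\<forall>x. integrable \<nu> (\<lambda>\<omega>. K x \<omega> * b \<omega>)) \<and>
          (\<forall>v. (\<Sum>\<^sub>\<infinity>x\<in>sector p v. ennreal (cmod (Kop \<nu> K b x) * m_nu o' p \<nu> x))
                 \<le> ennreal (f (enn2real (C_K o' p \<nu> K)) \<alpha> * m_nu o' p \<nu> v)))"
  shows "in_BMO o' p \<nu> b"
proof -
  obtain f :: "real \<Rightarrow> real \<Rightarrow> real" where
    f0: "\<forall>c \<alpha>. c \<ge> 0 \<longrightarrow> \<alpha> > 0 \<longrightarrow> f c \<alpha> \<ge> 0"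
    and fm: "\<forall>\<alpha>>0. mono_on {0..} (\<lambda>c. f c \<alpha>)"
    and fK: "\<forall>K \<alpha>. in_class_O o' p \<nu> K \<longrightarrow> A3 o' p \<nu> K \<alpha> \<longrightarrow>
          (\<forall>x. integrable \<nu> (\<lambda>\<omega>. K x \<omega> * b \<omega>)) \<and>
          (\<forall>v. (\<Sum>\<^sub>\<infinity>x\<in>sector p v. ennreal (cmod (Kop \<nu> K b x) * m x))
                 \<le> ennreal (f (enn2real (C_K o' p \<nu> K)) \<alpha> * m v))"
    using assms by blast
  show ?thesis unfolding in_BMO_def
    using loc osc_bound[OF f0 fm fK] by blast
qed

end

theorem theorem3p2:
  fixes o' :: "'v" and p :: "'v \<Rightarrow> 'v" and \<nu> :: "(int \<Rightarrow> 'v) measure"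
    and b :: "(int \<Rightarrow> 'v) \<Rightarrow> complex"
  assumes tree: "is_tree_with_end p"
    and two_succ: "\<forall>x. \<exists>y z. y \<in> succs p x \<and> z \<in> succs p x \<and> y \<noteq> z"
    and borel: "is_borel_measure_on_bdry o' p \<nu>"
    and dbl: "doubling o' p \<nu>"
    and loc: "L1loc o' p \<nu> b"
  shows "in_BMO o' p \<nu> b \<longleftrightarrow>
    (\<exists>f :: real \<Rightarrow> real \<Rightarrow> real.
       (\<forall>c \<alpha>. c \<ge> 0 \<longrightarrow> \<alpha> > 0 \<longrightarrow> f c \<alpha> \<ge> 0) \<and>
       (\<forall>\<alpha>>0. mono_on {0..} (\<lambda>c. f c \<alpha>)) \<and>
       (\<forall>K \<alpha>. in_class_O o' p \<nu> K \<longrightarrow> A3 o' p \<nu> K \<alpha> \<longrightarrow>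
          (\<forall>x. integrable \<nu> (\<lambda>\<omega>. K x \<omega> * b \<omega>)) \<and>
          (\<forall>v. (\<Sum>\<^sub>\<infinity>x\<in>sector p v. ennreal (cmod (Kop \<nu> K b x) * m_nu o' p \<nu> x))
                 \<le> ennreal (f (enn2real (C_K o' p \<nu> K)) \<alpha> * m_nu o' p \<nu> v))))"
proof
  have S: "S o' p \<nu> b" by (rule S.intro[OF tree two_succ borel dbl loc])
  {
    assume bmo: "in_BMO o' p \<nu> b"
    have SB: "SB o' p \<nu> b" by (rule SB.intro[OF S SB_axioms.intro[OF bmo]])
    show "\<exists>f :: real \<Rightarrow> real \<Rightarrow> real.
       (\<forall>c \<alpha>. c \<ge> 0 \<longrightarrow> \<alpha> > 0 \<longrightarrow> f c \<alpha> \<ge> 0) \<and>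
       (\<forall>\<alpha>>0. mono_on {0..} (\<lambda>c. f c \<alpha>)) \<and>
       (\<forall>K \<alpha>. in_class_O o' p \<nu> K \<longrightarrow> A3 o' p \<nu> K \<alpha> \<longrightarrow>
          (\<forall>x. integrable \<nu> (\<lambda>\<omega>. K x \<omega> * b \<omega>)) \<and>
          (\<forall>v. (\<Sum>\<^sub>\<infinity>x\<in>sector p v. ennreal (cmod (Kop \<nu> K b x) * m_nu o' p \<nu> x))
                 \<le> ennreal (f (enn2real (C_K o' p \<nu> K)) \<alpha> * m_nu o' p \<nu> v)))"
      by (rule SB.forward[OF SB])
  }
  {
    assume h: "\<exists>f :: real \<Rightarrow> real \<Rightarrow> real.
       (\<forall>c \<alpha>. c \<ge> 0 \<longrightarrow> \<alpha> > 0 \<longrightarrow> f c \<alpha> \<ge> 0) \<and>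
       (\<forall>\<alpha>>0. mono_on {0..} (\<lambda>c. f c \<alpha>)) \<and>
       (\<forall>K \<alpha>. in_class_O o' p \<nu> K \<longrightarrow> A3 o' p \<nu> K \<alpha> \<longrightarrow>
          (\<forall>x. integrable \<nu> (\<lambda>\<omega>. K x \<omega> * b \<omega>)) \<and>
          (\<forall>v. (\<Sum>\<^sub>\<infinity>x\<in>sector p v. ennreal (cmod (Kop \<nu> K b x) * m_nu o' p \<nu> x))
                 \<le> ennreal (f (enn2real (C_K o' p \<nu> K)) \<alpha> * m_nu o' p \<nu> v)))"
    show "in_BMO o' p \<nu> b" by (rule S.backward[OF S h])
  }
qed


end
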